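(* Let $(\gamma_k)_{k\ge3}$ be non-negative weights with $\gamma_k>0$ for at least one $k$, and suppose the power series $\sum_{k\ge1}\gamma_{k+2}z^k$ has radius of convergence $0$ (type III). Let $\mathsf{D}_n^\omega$ be the random dissection of the $n$-gon drawn with probability proportional to $\prod_F\gamma_{|F|}$, and let $v_n$ be a uniformly random vertex of $\mathsf{D}_n^\omega$. Then, as $n\to\infty$ along $n$ for which the total weight is positive, $(\mathsf{D}_n^\omega,v_n)$ converges in the Benjamini--Schramm (local weak) sense to the doubly infinite path $\mathbb{Z}$ rooted at $0$: for every $k\ge0$, $\mathbb{P}(V_k(\mathsf{D}_n^\omega,v_n)\simeq V_k(\mathbb{Z},0))\to1$.
   Context: For $n\ge3$, a dissection of the convex polygon with vertices $e^{2\pi ij/n}$, $j=0,\dots,n-1$, is the plane graph consisting of the polygon's sides together with a set of diagonals that pairwise intersect at most in endpoints. Its inner faces are the bounded faces; $|F|$ is the number of edges bounding $F$. $V_k(G,v)$ denotes the subgraph induced by vertices at graph distance at most $k$ from $v$, rooted at $v$; $\simeq$ denotes isomorphism of rooted graphs. *)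

theory Defs
  imports "HOL-Analysis.Analysis"
begin

text \<open>Vertices of the n-gon are 0,...,n-1 in cyclic (counterclockwise) order.
  Edges/diagonals are encoded as ordered pairs (i,j) with i < j.\<close>

definition poly_sides :: "nat \<Rightarrow> (nat \<times> nat) set" where
  "poly_sides n = {(i, i + 1) | i. i + 1 < n} \<union> {(0, n - 1)}"

definition diagonals :: "nat \<Rightarrow> (nat \<times> nat) set" where
  "diagonals n = {(i, j). i < j \<and> j < n \<and> (i, j) \<notin> poly_sides n}"

definition crossing :: "nat \<times> nat \<Rightarrow> nat \<times> nat \<Rightarrow> bool" where
  "crossing e f = (case e of (a, b) \<Rightarrow> case f of (c, d) \<Rightarrow>
      (a < c \<and> c < b \<and> b < d) \<or> (c < a \<and> a < d \<and> d < b))"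

definition dissections :: "nat \<Rightarrow> (nat \<times> nat) set set" where
  "dissections n = {D. D \<subseteq> diagonals n \<and> (\<forall>e\<in>D. \<forall>f\<in>D. \<not> crossing e f)}"

definition edges :: "nat \<Rightarrow> (nat \<times> nat) set \<Rightarrow> (nat \<times> nat) set" where
  "edges n D = poly_sides n \<union> D"

definition adj :: "nat \<Rightarrow> (nat \<times> nat) set \<Rightarrow> nat \<Rightarrow> nat \<Rightarrow> bool" where
  "adj n D x y = (x \<noteq> y \<and> (min x y, max x y) \<in> edges n D)"

definition cyc_consec :: "nat set \<Rightarrow> nat \<Rightarrow> nat \<Rightarrow> bool" where
  "cyc_consec S x y = (x \<in> S \<and> y \<in> S \<and> x < y \<and>
      ((\<forall>z\<in>S. \<not> (x < z \<and> z < y)) \<or> (x = Min S \<and> y = Max S)))"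

text \<open>Inner faces, identified with their vertex sets: a set S of at least 3 vertices
  such that two vertices of S are joined by an edge exactly when they are cyclically
  consecutive in S (then the convex polygon spanned by S is bounded by edges and no
  edge meets its interior).\<close>
definition inner_faces :: "nat \<Rightarrow> (nat \<times> nat) set \<Rightarrow> nat set set" where
  "inner_faces n D = {S. S \<subseteq> {..<n} \<and> card S \<ge> 3 \<and>
      (\<forall>x\<in>S. \<forall>y\<in>S. x < y \<longrightarrow> ((x, y) \<in> edges n D \<longleftrightarrow> cyc_consec S x y))}"

definition dweight :: "(nat \<Rightarrow> real) \<Rightarrow> nat \<Rightarrow> (nat \<times> nat) set \<Rightarrow> real" where
  "dweight \<gamma> n D = (\<Prod>F\<in>inner_faces n D. \<gamma> (card F))"

definition total_weight :: "(nat \<Rightarrow> real) \<Rightarrow> nat \<Rightarrow> real" where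
  "total_weight \<gamma> n = (\<Sum>D\<in>dissections n. dweight \<gamma> n D)"

definition ball_set :: "nat \<Rightarrow> (nat \<times> nat) set \<Rightarrow> nat \<Rightarrow> nat \<Rightarrow> nat set" where
  "ball_set n D v k = {x. \<exists>m\<le>k. (v, x) \<in> {(a, b). adj n D a b} ^^ m}"

definition ball_is_path :: "nat \<Rightarrow> (nat \<times> nat) set \<Rightarrow> nat \<Rightarrow> nat \<Rightarrow> bool" where
  "ball_is_path n D v k = (\<exists>f. bij_betw f {-int k..int k} (ball_set n D v k) \<and> f 0 = v \<and>
      (\<forall>i\<in>{-int k..int k}. \<forall>j\<in>{-int k..int k}. adj n D (f i) (f j) \<longleftrightarrow> \<bar>i - j\<bar> = 1))"

text \<open>P(V_k(D_n^omega, v_n) ~ V_k(Z,0)) with v_n uniform on the n vertices.\<close>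
definition prob_ball_path :: "(nat \<Rightarrow> real) \<Rightarrow> nat \<Rightarrow> nat \<Rightarrow> real" where
  "prob_ball_path \<gamma> n k = (\<Sum>D\<in>dissections n.
      dweight \<gamma> n D * real (card {v\<in>{..<n}. ball_is_path n D v k}))
      / (real n * total_weight \<gamma> n)"

end

theory Submission
  imports Defs
begin


lemma poly_sides_iff: "(x,y) \<in> poly_sides n \<longleftrightarrow> (x + 1 = y \<and> y < n) \<or> (x = 0 \<and> y = n - 1)"
  by (auto simp: poly_sides_def)

lemma dissD: "D \<in> dissections n \<Longrightarrow> (x,y) \<in> D \<Longrightarrow> x < y \<and> y < n \<and> (x,y) \<notin> poly_sides n"
  by (auto simp: dissections_def diagonals_def)

lemma edges_lt: "D \<in> dissections n \<Longrightarrow> n \<ge> 2 \<Longrightarrow> (x,y) \<in> edges n D \<Longrightarrow> x < y \<and> y < n"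
  by (auto simp: edges_def poly_sides_iff dest: dissD)

definition nodiag :: "(nat \<times> nat) set \<Rightarrow> nat \<Rightarrow> bool" where
  "nodiag D x = (\<forall>(p,q)\<in>D. p \<noteq> x \<and> q \<noteq> x)"

lemma face_sub: "S \<in> inner_faces n D \<Longrightarrow> S \<subseteq> {..<n}"
  by (auto simp: inner_faces_def)
lemma face_card: "S \<in> inner_faces n D \<Longrightarrow> card S \<ge> 3"
  by (auto simp: inner_faces_def)
lemma face_fin: "S \<in> inner_faces n D \<Longrightarrow> finite S"
  by (meson face_sub finite_lessThan finite_subset)
lemma face_pair: "S \<in> inner_faces n D \<Longrightarrow> x \<in> S \<Longrightarrow> y \<in> S \<Longrightarrow> x < y \<Longrightarrow>
   (x, y) \<in> edges n D \<longleftrightarrow> cyc_consec S x y"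
  by (auto simp: inner_faces_def)

lemma card_le2: "S \<subseteq> {p, q} \<Longrightarrow> card S \<le> 2"
proof -
  assume "S \<subseteq> {p, q}"
  hence "card S \<le> card {p,q}" by (intro card_mono) auto
  moreover have "card {p,q} \<le> 2" by (cases "p = q") auto
  ultimately show ?thesis by linarith
qed

lemma face_succ:
  assumes F: "S \<in> inner_faces n D" and D: "D \<in> dissections n" and x: "x \<in> S" and nd: "nodiag D x"
  shows "(if x + 1 < n then x + 1 else 0) \<in> S"
proof (cases "\<exists>z\<in>S. x < z")
  case True
  define y where "y = Min {z\<in>S. x < z}"
  have fin: "finite {z\<in>S. x < z}" using face_fin[OF F] by auto
  have yin: "y \<in> {z\<in>S. x < z}" unfolding y_def using True fin by (intro Min_in) auto
  have nob: "\<forall>z\<in>S. \<not> (x < z \<and> z < y)"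
  proof (intro ballI notI)
    fix z assume z: "z \<in> S" "x < z \<and> z < y"
    hence "y \<le> z" unfolding y_def using fin by (intro Min_le) auto
    thus False using z by simp
  qed
  have "cyc_consec S x y" unfolding cyc_consec_def using yin nob x by simp
  hence e: "(x,y) \<in> edges n D" using face_pair[OF F x] yin by auto
  have "(x,y) \<notin> D" using nd by (auto simp: nodiag_def)
  hence "(x,y) \<in> poly_sides n" using e by (auto simp: edges_def)
  hence "(x + 1 = y \<and> y < n) \<or> (x = 0 \<and> y = n - 1)" by (simp add: poly_sides_iff)
  moreover have "\<not> (x = 0 \<and> y = n - 1 \<and> x + 1 \<noteq> y)"
  proof
    assume h: "x = 0 \<and> y = n - 1 \<and> x + 1 \<noteq> y"
    have "S \<subseteq> {0, n - 1}"
    proof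
      fix z assume z: "z \<in> S"
      have "z < n" using face_sub[OF F] z by auto
      have "\<not> (0 < z \<and> z < n - 1)" using nob z h by simp
      thus "z \<in> {0, n - 1}" using \<open>z < n\<close> by auto
    qed
    hence "card S \<le> 2" by (rule card_le2)
    thus False using face_card[OF F] by linarith
  qed
  ultimately show ?thesis using yin by auto
next
  case False
  define m where "m = Min S"
  have fin: "finite S" using face_fin[OF F] .
  have ne: "S \<noteq> {}" using x by auto
  have mS: "m \<in> S" unfolding m_def using fin ne by auto
  have xmax: "x = Max S"
  proof -
    have "\<And>y. y \<in> S \<Longrightarrow> y \<le> x" using False by (meson not_le)
    thus ?thesis using fin x by (intro Max_eqI[symmetric]) auto
  qed
  have mx: "m \<noteq> x"
  proof
    assume "m = x"
    have "S \<subseteq> {x, x}"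
    proof
      fix z assume z: "z \<in> S"
      have "m \<le> z" using z fin m_def by auto
      moreover have "z \<le> x" using z fin xmax by auto
      ultimately show "z \<in> {x, x}" using \<open>m = x\<close> by auto
    qed
    hence "card S \<le> 2" by (rule card_le2)
    thus False using face_card[OF F] by linarith
  qed
  have "m \<le> x" using fin x m_def by auto
  hence mlx: "m < x" using mx by auto
  have "cyc_consec S m x" unfolding cyc_consec_def using mS x mlx xmax m_def by simp
  hence e: "(m,x) \<in> edges n D" using face_pair[OF F mS x mlx] by auto
  have "(m,x) \<notin> D" using nd by (auto simp: nodiag_def)
  hence "(m,x) \<in> poly_sides n" using e by (auto simp: edges_def)
  hence h: "(m + 1 = x \<and> x < n) \<or> (m = 0 \<and> x = n - 1)" by (simp add: poly_sides_iff)
  have "\<not> (m + 1 = x)"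
  proof
    assume "m + 1 = x"
    have "S \<subseteq> {m, x}"
    proof
      fix z assume z: "z \<in> S"
      have "m \<le> z" using z fin m_def by auto
      moreover have "z \<le> x" using z fin xmax by auto
      ultimately show "z \<in> {m, x}" using \<open>m + 1 = x\<close> by auto
    qed
    hence "card S \<le> 2" by (rule card_le2)
    thus False using face_card[OF F] by linarith
  qed
  hence "m = 0 \<and> x = n - 1" using h by auto
  moreover have "n \<ge> 1" using face_sub[OF F] x by (cases n) auto
  ultimately show ?thesis using mS by auto
qed

lemma face_pred:
  assumes F: "S \<in> inner_faces n D" and D: "D \<in> dissections n" and x: "x \<in> S" and nd: "nodiag D x"
  shows "(if 0 < x then x - 1 else n - 1) \<in> S"
proof (cases "\<exists>z\<in>S. z < x")
  case True
  define y where "y = Max {z\<in>S. z < x}"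
  have fin: "finite {z\<in>S. z < x}" using face_fin[OF F] by auto
  have yin: "y \<in> {z\<in>S. z < x}" unfolding y_def using True fin by (intro Max_in) auto
  have nob: "\<forall>z\<in>S. \<not> (y < z \<and> z < x)"
  proof (intro ballI notI)
    fix z assume z: "z \<in> S" "y < z \<and> z < x"
    hence "z \<le> y" unfolding y_def using fin by (intro Max_ge) auto
    thus False using z by simp
  qed
  have "cyc_consec S y x" unfolding cyc_consec_def using yin nob x by simp
  hence e: "(y,x) \<in> edges n D" using face_pair[OF F _ x] yin by auto
  have "(y,x) \<notin> D" using nd by (auto simp: nodiag_def)
  hence "(y,x) \<in> poly_sides n" using e by (auto simp: edges_def)
  hence "(y + 1 = x \<and> x < n) \<or> (y = 0 \<and> x = n - 1)" by (simp add: poly_sides_iff)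
  moreover have "\<not> (y = 0 \<and> x = n - 1 \<and> y + 1 \<noteq> x)"
  proof
    assume h: "y = 0 \<and> x = n - 1 \<and> y + 1 \<noteq> x"
    have "S \<subseteq> {0, n - 1}"
    proof
      fix z assume z: "z \<in> S"
      have "z < n" using face_sub[OF F] z by auto
      have "\<not> (0 < z \<and> z < n - 1)" using nob z h by simp
      thus "z \<in> {0, n - 1}" using \<open>z < n\<close> by auto
    qed
    hence "card S \<le> 2" by (rule card_le2)
    thus False using face_card[OF F] by linarith
  qed
  ultimately have "y + 1 = x" by auto
  thus ?thesis using yin by (cases x) auto
next
  case False
  define m where "m = Max S"
  have fin: "finite S" using face_fin[OF F] .
  have ne: "S \<noteq> {}" using x by auto
  have mS: "m \<in> S" unfolding m_def using fin ne by auto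
  have xmin: "x = Min S"
  proof -
    have "\<And>y. y \<in> S \<Longrightarrow> x \<le> y" using False by (meson not_le)
    thus ?thesis using fin x by (intro Min_eqI[symmetric]) auto
  qed
  have mx: "m \<noteq> x"
  proof
    assume "m = x"
    have "S \<subseteq> {x, x}"
    proof
      fix z assume z: "z \<in> S"
      have "z \<le> m" using z fin m_def by auto
      moreover have "x \<le> z" using z fin xmin by auto
      ultimately show "z \<in> {x, x}" using \<open>m = x\<close> by auto
    qed
    hence "card S \<le> 2" by (rule card_le2)
    thus False using face_card[OF F] by linarith
  qed
  have "x \<le> m" using fin x m_def by auto
  hence mlx: "x < m" using mx by auto
  have "cyc_consec S x m" unfolding cyc_consec_def using mS x mlx xmin m_def by simp
  hence e: "(x,m) \<in> edges n D" using face_pair[OF F x mS mlx] by auto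
  have "(x,m) \<notin> D" using nd by (auto simp: nodiag_def)
  hence "(x,m) \<in> poly_sides n" using e by (auto simp: edges_def)
  hence h: "(x + 1 = m \<and> m < n) \<or> (x = 0 \<and> m = n - 1)" by (simp add: poly_sides_iff)
  have "\<not> (x + 1 = m)"
  proof
    assume "x + 1 = m"
    have "S \<subseteq> {x, m}"
    proof
      fix z assume z: "z \<in> S"
      have "z \<le> m" using z fin m_def by auto
      moreover have "x \<le> z" using z fin xmin by auto
      ultimately show "z \<in> {x, m}" using \<open>x + 1 = m\<close> by auto
    qed
    hence "card S \<le> 2" by (rule card_le2)
    thus False using face_card[OF F] by linarith
  qed
  hence "x = 0 \<and> m = n - 1" using h by auto
  thus ?thesis using mS by auto
qed

lemma face_up:
  assumes F: "S \<in> inner_faces n D" and D: "D \<in> dissections n" and x: "x \<in> S"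
    and nd: "\<And>i. x \<le> i \<Longrightarrow> i < t \<Longrightarrow> nodiag D i" and t: "t < n"
  shows "x \<le> j \<Longrightarrow> j \<le> t \<Longrightarrow> j \<in> S"
proof (induction j)
  case 0 thus ?case using x by simp
next
  case (Suc j)
  show ?case
  proof (cases "x \<le> j")
    case True
    hence "j \<in> S" using Suc by simp
    from face_succ[OF F D this nd[OF True]] Suc.prems t show ?thesis by (auto split: if_splits)
  next
    case False thus ?thesis using Suc.prems x by (simp add: not_le le_Suc_eq)
  qed
qed

lemma face_down:
  assumes F: "S \<in> inner_faces n D" and D: "D \<in> dissections n" and x: "x \<in> S"
    and nd: "\<And>i. t < i \<Longrightarrow> i \<le> x \<Longrightarrow> nodiag D i"
  shows "t \<le> j \<Longrightarrow> j \<le> x \<Longrightarrow> j \<in> S"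
proof (induction "x - j" arbitrary: j)
  case 0 thus ?case using x by simp
next
  case (Suc k)
  hence jx: "j < x" by simp
  have "j + 1 \<in> S" using Suc.hyps(1)[of "j+1"] Suc by simp
  from face_pred[OF F D this nd] Suc.prems jx show ?case by (auto split: if_splits)
qed

lemma faces_empty:
  assumes n: "n \<ge> 3"
  shows "inner_faces n {} = {{..<n}}"
proof -
  have D: "{} \<in> dissections n" by (simp add: dissections_def)
  have nd: "\<And>i. nodiag {} i" by (simp add: nodiag_def)
  have "S = {..<n}" if F: "S \<in> inner_faces n {}" for S
  proof -
    have "card S \<ge> 3" using face_card[OF F] .
    then obtain x where x: "x \<in> S" by fastforce
    have xn: "x < n" using face_sub[OF F] x by auto
    have up: "\<And>j. x \<le> j \<Longrightarrow> j < n \<Longrightarrow> j \<in> S"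
      using face_up[OF F D x nd, of "n - 1"] n by auto
    have "n - 1 \<in> S" using up xn by auto
    from face_succ[OF F D this nd] n have "0 \<in> S" by auto
    have "\<And>j. j < n \<Longrightarrow> j \<in> S"
      using face_up[OF F D \<open>0 \<in> S\<close> nd, of "n - 1"] n by auto
    thus ?thesis using face_sub[OF F] by auto
  qed
  moreover have "{..<n} \<in> inner_faces n {}"
  proof -
    have mn: "Min {..<n} = 0" using n by (intro Min_eqI) auto
    have mx: "Max {..<n} = n - 1" using n by (intro Max_eqI) auto
    have "(x, y) \<in> edges n {} \<longleftrightarrow> cyc_consec {..<n} x y" if "x < n" "y < n" "x < y" for x y
    proof -
      have "(\<forall>z\<in>{..<n}. \<not> (x < z \<and> z < y)) \<longleftrightarrow> y = x + 1"
      proof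
        assume h: "\<forall>z\<in>{..<n}. \<not> (x < z \<and> z < y)"
        show "y = x + 1"
        proof (rule ccontr)
          assume "y \<noteq> x + 1"
          hence "x + 1 < y" using that by simp
          thus False using h that by (metis lessThan_iff less_add_one less_trans)
        qed
      qed auto
      thus ?thesis using that mn mx by (auto simp: edges_def poly_sides_iff cyc_consec_def)
    qed
    thus ?thesis using n by (auto simp: inner_faces_def)
  qed
  ultimately show ?thesis by blast
qed


lemma cyc_consec_smono:
  assumes f: "strict_mono (f::nat\<Rightarrow>nat)" and S: "finite S" "x \<in> S" "y \<in> S"
  shows "cyc_consec (f ` S) (f x) (f y) \<longleftrightarrow> cyc_consec S x y"
proof -
  have ne: "S \<noteq> {}" using S by auto
  have mi: "Min (f ` S) = f (Min S)" using mono_Min_commute[OF strict_mono_mono[OF f] S(1) ne] by simp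
  have ma: "Max (f ` S) = f (Max S)" using mono_Max_commute[OF strict_mono_mono[OF f] S(1) ne] by simp
  have eq: "\<And>u v. f u = f v \<longleftrightarrow> u = v" using strict_mono_eq[OF f] by blast
  have lt: "\<And>u v. f u < f v \<longleftrightarrow> u < v" using strict_mono_less[OF f] by blast
  have "(\<forall>z\<in>f ` S. \<not> (f x < z \<and> z < f y)) \<longleftrightarrow> (\<forall>z\<in>S. \<not> (x < z \<and> z < y))"
    using lt by auto
  thus ?thesis unfolding cyc_consec_def mi ma eq lt using S by auto
qed

lemma diss_fin: "D \<in> dissections n \<Longrightarrow> finite D"
proof -
  assume D: "D \<in> dissections n"
  have "D \<subseteq> {..<n} \<times> {..<n}"
  proof
    fix p assume p: "p \<in> D"
    obtain x y where xy: "p = (x,y)" by force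
    have "x < y \<and> y < n" using dissD[OF D p[unfolded xy]] by simp
    thus "p \<in> {..<n} \<times> {..<n}" using xy by auto
  qed
  thus ?thesis by (rule finite_subset) auto
qed

lemma inner_faces_fin: "finite (inner_faces n D)"
proof -
  have "inner_faces n D \<subseteq> Pow {..<n}" by (auto simp: inner_faces_def)
  thus ?thesis by (rule finite_subset) auto
qed

locale ear =
  fixes n :: nat and D :: "(nat \<times> nat) set" and a b :: nat
  assumes D: "D \<in> dissections n" and n3: "n \<ge> 3" and ab: "(a,b) \<in> D"
    and clear: "\<And>x y. (x,y) \<in> D \<Longrightarrow> \<not> (a < x \<and> x < b) \<and> \<not> (a < y \<and> y < b)"
begin

definition d where "d = b - a - 1"
definition n' where "n' = n - d"
definition e where "e j = (if j \<le> a then j else j + d)"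
definition c where "c i = (if i \<le> a then i else i - d)"
definition D' where "D' = {(u,v). (e u, e v) \<in> D \<and> (u,v) \<noteq> (a, a+1)}"

lemma basics: "a + 2 \<le> b" "b < n" "1 \<le> d" "a + d + 1 = b" "3 \<le> n'" "a + 1 < n'" "n' + d = n"
proof -
  have h: "a < b" "b < n" "(a,b) \<notin> poly_sides n" using dissD[OF D ab] by auto
  hence h2: "a + 1 \<noteq> b" "\<not> (a = 0 \<and> b = n - 1)" by (auto simp: poly_sides_iff)
  show "a + 2 \<le> b" "b < n" using h h2 by auto
  show "1 \<le> d" "a + d + 1 = b" using h h2 by (auto simp: d_def)
  show "3 \<le> n'" "a + 1 < n'" "n' + d = n" using h h2 by (auto simp: d_def n'_def)
qed

lemma e_smono: "strict_mono e"
  unfolding strict_mono_def e_def by auto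
lemma e_lt: "e u < e v \<longleftrightarrow> u < v" using strict_mono_less[OF e_smono] .
lemma e_eq: "e u = e v \<longleftrightarrow> u = v" using strict_mono_eq[OF e_smono] .
lemma e_inj: "inj e" using e_eq by (auto intro: injI)
lemma e_n: "e v < n \<longleftrightarrow> v < n'" using basics by (auto simp: e_def)
lemma e_out: "\<not> (a < e u \<and> e u < b)" using basics by (auto simp: e_def)
lemma ec: "x \<le> a \<or> b \<le> x \<Longrightarrow> e (c x) = x" using basics by (auto simp: e_def c_def)
lemma c_n: "x < n \<Longrightarrow> x \<le> a \<or> b \<le> x \<Longrightarrow> c x < n'" using basics by (auto simp: c_def)
lemma e_succ: "u \<noteq> a \<Longrightarrow> e (u+1) = e u + 1" by (auto simp: e_def)
lemma e_vals: "e a = a" "e (a+1) = b" "e 0 = 0" "e (n' - 1) = n - 1"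
  using basics by (auto simp: e_def)
lemma D_out: "(x,y) \<in> D \<Longrightarrow> (x \<le> a \<or> b \<le> x) \<and> (y \<le> a \<or> b \<le> y)"
  using clear by fastforce

lemma edges_corr:
  assumes uv: "u < v" "v < n'"
  shows "(e u, e v) \<in> edges n D \<longleftrightarrow> (u,v) \<in> edges n' D'"
proof
  assume h: "(e u, e v) \<in> edges n D"
  show "(u,v) \<in> edges n' D'"
  proof (cases "(e u, e v) \<in> D")
    case True
    thus ?thesis using uv basics by (cases "(u,v) = (a,a+1)") (auto simp: edges_def D'_def poly_sides_iff)
  next
    case False
    hence ps: "(e u, e v) \<in> poly_sides n" using h by (auto simp: edges_def)
    hence "(e u + 1 = e v \<and> e v < n) \<or> (e u = 0 \<and> e v = n - 1)" by (simp add: poly_sides_iff)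
    thus ?thesis
    proof
      assume h1: "e u + 1 = e v \<and> e v < n"
      have "u \<noteq> a"
      proof
        assume "u = a"
        hence "e v = a + 1" using h1 e_vals by simp
        moreover have "a < e v \<and> e v < b" using calculation basics by simp
        thus False using e_out by blast
      qed
      hence "e (u+1) = e v" using h1 e_succ by simp
      hence "v = u + 1" using e_eq by simp
      thus ?thesis using uv by (auto simp: edges_def poly_sides_iff)
    next
      assume h1: "e u = 0 \<and> e v = n - 1"
      hence "u = 0" using e_eq e_vals by metis
      moreover have "v = n' - 1" using h1 e_eq e_vals by metis
      ultimately show ?thesis by (auto simp: edges_def poly_sides_iff)
    qed
  qed
next
  assume h: "(u,v) \<in> edges n' D'"
  show "(e u, e v) \<in> edges n D"
  proof (cases "(u,v) \<in> D'")
    case True thus ?thesis by (auto simp: edges_def D'_def)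
  next
    case False
    hence "(u,v) \<in> poly_sides n'" using h by (auto simp: edges_def)
    hence "(u + 1 = v \<and> v < n') \<or> (u = 0 \<and> v = n' - 1)" by (simp add: poly_sides_iff)
    thus ?thesis
    proof
      assume h1: "u + 1 = v \<and> v < n'"
      show ?thesis
      proof (cases "u = a")
        case True thus ?thesis using h1 e_vals ab by (auto simp: edges_def)
      next
        case False
        hence "e v = e u + 1" using h1 e_succ by auto
        moreover have "e v < n" using h1 e_n by simp
        ultimately show ?thesis by (auto simp: edges_def poly_sides_iff)
      qed
    next
      assume h1: "u = 0 \<and> v = n' - 1"
      thus ?thesis using e_vals by (auto simp: edges_def poly_sides_iff)
    qed
  qed
qed


lemma side_corr: "(u,v) \<in> poly_sides n' \<Longrightarrow> (u,v) \<noteq> (a,a+1) \<Longrightarrow> (e u, e v) \<in> poly_sides n"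
proof -
  assume h: "(u,v) \<in> poly_sides n'" and ne: "(u,v) \<noteq> (a,a+1)"
  hence "(u + 1 = v \<and> v < n') \<or> (u = 0 \<and> v = n' - 1)" by (simp add: poly_sides_iff)
  thus ?thesis
  proof
    assume h1: "u + 1 = v \<and> v < n'"
    hence "u \<noteq> a" using ne by auto
    hence "e v = e u + 1" using h1 e_succ by auto
    moreover have "e v < n" using h1 e_n by simp
    ultimately show ?thesis by (auto simp: poly_sides_iff)
  next
    assume h1: "u = 0 \<and> v = n' - 1"
    thus ?thesis using e_vals by (auto simp: poly_sides_iff)
  qed
qed

lemma crossing_e: "crossing (e p, e q) (e r, e s) = crossing (p,q) (r,s)"
  unfolding crossing_def using e_lt by auto

lemma D'_diss: "D' \<in> dissections n'"
proof -
  have "D' \<subseteq> diagonals n'"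
  proof
    fix p assume p: "p \<in> D'"
    obtain u v where uv: "p = (u,v)" by force
    have h: "(e u, e v) \<in> D" "(u,v) \<noteq> (a,a+1)" using p uv by (auto simp: D'_def)
    have h2: "e u < e v" "e v < n" "(e u, e v) \<notin> poly_sides n" using dissD[OF D h(1)] by auto
    have "u < v" "v < n'" using h2 e_lt e_n by auto
    moreover have "(u,v) \<notin> poly_sides n'" using side_corr h(2) h2(3) by blast
    ultimately show "p \<in> diagonals n'" using uv by (auto simp: diagonals_def)
  qed
  moreover have "\<forall>p\<in>D'. \<forall>q\<in>D'. \<not> crossing p q"
  proof (intro ballI)
    fix p q assume p: "p \<in> D'" and q: "q \<in> D'"
    obtain u v where uv: "p = (u,v)" by force
    obtain u2 v2 where uv2: "q = (u2,v2)" by force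
    have "(e u, e v) \<in> D" "(e u2, e v2) \<in> D" using p q uv uv2 by (auto simp: D'_def)
    hence "\<not> crossing (e u, e v) (e u2, e v2)" using D by (auto simp: dissections_def)
    thus "\<not> crossing p q" using uv uv2 crossing_e by simp
  qed
  ultimately show ?thesis by (simp add: dissections_def)
qed

lemma D'_bij: "bij_betw (map_prod e e) D' (D - {(a,b)})"
proof (rule bij_betw_imageI)
  show "inj_on (map_prod e e) D'" using e_inj by (auto intro!: inj_onI simp: e_eq)
  show "map_prod e e ` D' = D - {(a, b)}"
  proof
    show "map_prod e e ` D' \<subseteq> D - {(a, b)}"
    proof
      fix p assume "p \<in> map_prod e e ` D'"
      then obtain u v where uv: "(u,v) \<in> D'" "p = (e u, e v)" by auto
      hence h: "(e u, e v) \<in> D" "(u,v) \<noteq> (a,a+1)" by (auto simp: D'_def)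
      have "(e u, e v) \<noteq> (a, b)"
      proof
        assume "(e u, e v) = (a,b)"
        hence "e u = e a" "e v = e (a+1)" using e_vals by auto
        hence "u = a" "v = a + 1" using e_eq by auto
        thus False using h by simp
      qed
      thus "p \<in> D - {(a,b)}" using h uv by simp
    qed
  next
    show "D - {(a, b)} \<subseteq> map_prod e e ` D'"
    proof
      fix p assume p: "p \<in> D - {(a,b)}"
      obtain x y where xy: "p = (x,y)" by force
      have o: "(x \<le> a \<or> b \<le> x) \<and> (y \<le> a \<or> b \<le> y)" using D_out p xy by auto
      have ex: "e (c x) = x" "e (c y) = y" using o ec by auto
      have "(c x, c y) \<noteq> (a, a+1)"
      proof
        assume "(c x, c y) = (a, a+1)"
        hence "x = a" "y = b" using ex e_vals by auto
        thus False using p xy by simp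
      qed
      hence "(c x, c y) \<in> D'" using ex p xy by (auto simp: D'_def)
      thus "p \<in> map_prod e e ` D'" using ex xy by force
    qed
  qed
qed

lemma D'_card: "card D' = card D - 1"
proof -
  have "card D' = card (D - {(a,b)})" using bij_betw_same_card[OF D'_bij] .
  also have "\<dots> = card D - 1" using ab diss_fin[OF D] by simp
  finally show ?thesis .
qed

lemma face_corr:
  assumes S: "S' \<subseteq> {..<n'}"
  shows "e ` S' \<in> inner_faces n D \<longleftrightarrow> S' \<in> inner_faces n' D'"
proof -
  have fin: "finite S'" using S by (rule finite_subset) auto
  have sub: "e ` S' \<subseteq> {..<n}" using S e_n by auto
  have cd: "card (e ` S') = card S'" using e_inj by (simp add: card_image inj_on_subset)
  have "(\<forall>x\<in>e ` S'. \<forall>y\<in>e ` S'. x < y \<longrightarrow> ((x, y) \<in> edges n D \<longleftrightarrow> cyc_consec (e ` S') x y))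
      \<longleftrightarrow> (\<forall>x\<in>S'. \<forall>y\<in>S'. x < y \<longrightarrow> ((x, y) \<in> edges n' D' \<longleftrightarrow> cyc_consec S' x y))"
  proof -
    have "\<And>x y. x \<in> S' \<Longrightarrow> y \<in> S' \<Longrightarrow> x < y \<Longrightarrow>
       ((e x, e y) \<in> edges n D \<longleftrightarrow> cyc_consec (e ` S') (e x) (e y)) \<longleftrightarrow>
       ((x, y) \<in> edges n' D' \<longleftrightarrow> cyc_consec S' x y)"
      using edges_corr cyc_consec_smono[OF e_smono fin] S by auto
    thus ?thesis using e_lt by auto
  qed
  thus ?thesis using S sub cd by (simp add: inner_faces_def)
qed

lemma ab_face: "{a..b} \<in> inner_faces n D"
proof -
  have bn: "b < n" "a + 2 \<le> b" using basics by auto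
  have mi: "Min {a..b} = a" using bn by (intro Min_eqI) auto
  have ma: "Max {a..b} = b" using bn by (intro Max_eqI) auto
  have "(x, y) \<in> edges n D \<longleftrightarrow> cyc_consec {a..b} x y" if xy: "x \<in> {a..b}" "y \<in> {a..b}" "x < y" for x y
  proof -
    have "(x, y) \<in> edges n D \<longleftrightarrow> (x + 1 = y \<or> (x = a \<and> y = b))"
    proof
      assume h: "(x, y) \<in> edges n D"
      show "x + 1 = y \<or> (x = a \<and> y = b)"
      proof (cases "(x,y) \<in> D")
        case True
        hence "(x \<le> a \<or> b \<le> x) \<and> (y \<le> a \<or> b \<le> y)" using D_out by auto
        thus ?thesis using xy by auto
      next
        case False
        hence "(x,y) \<in> poly_sides n" using h by (auto simp: edges_def)
        hence "(x + 1 = y \<and> y < n) \<or> (x = 0 \<and> y = n - 1)" by (simp add: poly_sides_iff)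
        moreover have "(a,b) \<noteq> (0, n - 1)" using dissD[OF D ab] by (auto simp: poly_sides_iff)
        ultimately show ?thesis using xy bn by auto
      qed
    next
      assume "x + 1 = y \<or> (x = a \<and> y = b)"
      thus "(x, y) \<in> edges n D" using ab xy bn by (auto simp: edges_def poly_sides_iff)
    qed
    moreover have "cyc_consec {a..b} x y \<longleftrightarrow> (x + 1 = y \<or> (x = a \<and> y = b))"
    proof -
      have "(\<forall>z\<in>{a..b}. \<not> (x < z \<and> z < y)) \<longleftrightarrow> x + 1 = y"
      proof
        assume h: "\<forall>z\<in>{a..b}. \<not> (x < z \<and> z < y)"
        show "x + 1 = y"
        proof (rule ccontr)
          assume "x + 1 \<noteq> y"
          hence "x < x + 1 \<and> x + 1 < y" "x + 1 \<in> {a..b}" using xy by auto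
          thus False using h by blast
        qed
      qed auto
      thus ?thesis unfolding cyc_consec_def mi ma using xy by auto
    qed
    ultimately show ?thesis by simp
  qed
  moreover have "card {a..b} \<ge> 3" using bn by simp
  ultimately show ?thesis using bn by (auto simp: inner_faces_def)
qed

lemma faces_eq: "inner_faces n D = insert {a..b} ((`) e ` inner_faces n' D')"
proof
  show "inner_faces n D \<subseteq> insert {a..b} ((`) e ` inner_faces n' D')"
  proof
    fix S assume F: "S \<in> inner_faces n D"
    show "S \<in> insert {a..b} ((`) e ` inner_faces n' D')"
    proof (cases "\<exists>x\<in>S. a < x \<and> x < b")
      case True
      then obtain x where x: "x \<in> S" "a < x" "x < b" by auto
      have nd: "\<And>i. a < i \<Longrightarrow> i < b \<Longrightarrow> nodiag D i"
        using D_out unfolding nodiag_def by fastforce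
      have up: "\<And>j. x \<le> j \<Longrightarrow> j \<le> b \<Longrightarrow> j \<in> S"
        using face_up[OF F D x(1), of b] nd x basics by auto
      have dn: "\<And>j. a \<le> j \<Longrightarrow> j \<le> x \<Longrightarrow> j \<in> S"
        using face_down[OF F D x(1), of a] nd x by auto
      have aS: "a \<in> S" and bS: "b \<in> S" using up dn x by auto
      have "(a,b) \<in> edges n D" using ab by (simp add: edges_def)
      hence "cyc_consec S a b" using face_pair[OF F aS bS] basics by auto
      hence mm: "a = Min S" "b = Max S" using x unfolding cyc_consec_def by auto
      have fin: "finite S" using face_fin[OF F] .
      have "S \<subseteq> {a..b}" using mm fin by auto
      moreover have "{a..b} \<subseteq> S"
      proof
        fix j assume "j \<in> {a..b}"
        thus "j \<in> S" using up dn by (cases "j \<le> x") auto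
      qed
      ultimately show ?thesis by auto
    next
      case False
      have so: "\<And>x. x \<in> S \<Longrightarrow> (x \<le> a \<or> b \<le> x) \<and> x < n" using False face_sub[OF F] by fastforce
      have Se: "e ` (c ` S) = S"
      proof -
        have eq: "\<And>x. x \<in> S \<Longrightarrow> e (c x) = x" using so ec by auto
        have "e ` (c ` S) = (\<lambda>x. e (c x)) ` S" by (simp add: image_image)
        also have "\<dots> = (\<lambda>x. x) ` S" by (rule image_cong) (auto simp: eq)
        also have "\<dots> = S" by simp
        finally show ?thesis .
      qed
      have csub: "c ` S \<subseteq> {..<n'}" using so c_n by auto
      have "c ` S \<in> inner_faces n' D'" using face_corr[OF csub] Se F by simp
      thus ?thesis using Se by blast
    qed
  qed
next
  show "insert {a..b} ((`) e ` inner_faces n' D') \<subseteq> inner_faces n D"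
    using ab_face face_corr face_sub by auto
qed

lemma ab_notin: "{a..b} \<notin> (`) e ` inner_faces n' D'"
proof
  assume "{a..b} \<in> (`) e ` inner_faces n' D'"
  then obtain S' where "{a..b} = e ` S'" by auto
  moreover have "a + 1 \<in> {a..b}" using basics by simp
  ultimately obtain u where u: "e u = a + 1" by auto
  have "\<not> (a < e u \<and> e u < b)" by (rule e_out)
  thus False using u basics by simp
qed

lemma faces_card: "card (inner_faces n D) = card (inner_faces n' D') + 1"
proof -
  have inj: "inj_on ((`) e) (inner_faces n' D')" using e_inj by (auto intro!: inj_onI dest: inj_image_eq_iff[THEN iffD1])
  have "card (inner_faces n D) = card ((`) e ` inner_faces n' D') + 1"
    unfolding faces_eq using ab_notin inner_faces_fin by simp
  also have "\<dots> = card (inner_faces n' D') + 1" using card_image[OF inj] by simp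
  finally show ?thesis .
qed

lemma faces_sum: "(\<Sum>F\<in>inner_faces n D. f (card F)) = f (b - a + 1) + (\<Sum>F\<in>inner_faces n' D'. f (card F))"
proof -
  have inj: "inj_on ((`) e) (inner_faces n' D')" using e_inj by (auto intro!: inj_onI dest: inj_image_eq_iff[THEN iffD1])
  have cab: "card {a..b} = b - a + 1" using basics by simp
  have "(\<Sum>F\<in>inner_faces n D. f (card F)) = f (card {a..b}) + (\<Sum>F\<in>(`) e ` inner_faces n' D'. f (card F))"
    unfolding faces_eq using ab_notin inner_faces_fin by simp
  also have "(\<Sum>F\<in>(`) e ` inner_faces n' D'. f (card F)) = (\<Sum>F\<in>inner_faces n' D'. f (card (e ` F)))"
    using sum.reindex[OF inj] by simp
  also have "\<dots> = (\<Sum>F\<in>inner_faces n' D'. f (card F))" using e_inj by (simp add: card_image inj_on_subset)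
  finally show ?thesis unfolding cab .
qed

lemma faces_prod: "(\<Prod>F\<in>inner_faces n D. f (card F)) = f (b - a + 1) * (\<Prod>F\<in>inner_faces n' D'. f (card F))"
proof -
  have inj: "inj_on ((`) e) (inner_faces n' D')" using e_inj by (auto intro!: inj_onI dest: inj_image_eq_iff[THEN iffD1])
  have cab: "card {a..b} = b - a + 1" using basics by simp
  have "(\<Prod>F\<in>inner_faces n D. f (card F)) = f (card {a..b}) * (\<Prod>F\<in>(`) e ` inner_faces n' D'. f (card F))"
    unfolding faces_eq using ab_notin inner_faces_fin by simp
  also have "(\<Prod>F\<in>(`) e ` inner_faces n' D'. f (card F)) = (\<Prod>F\<in>inner_faces n' D'. f (card (e ` F)))"
    using prod.reindex[OF inj] by simp
  also have "\<dots> = (\<Prod>F\<in>inner_faces n' D'. f (card F))" using e_inj by (simp add: card_image inj_on_subset)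
  finally show ?thesis unfolding cab .
qed

end


definition fsz :: "nat \<Rightarrow> (nat \<times> nat) set \<Rightarrow> nat multiset" where
  "fsz n D = image_mset card (mset_set (inner_faces n D))"

lemma (in ear) fsz_eq: "fsz n D = add_mset (b - a + 1) (fsz n' D')"
proof -
  have inj: "inj_on ((`) e) (inner_faces n' D')" using e_inj by (auto intro!: inj_onI dest: inj_image_eq_iff[THEN iffD1])
  have cab: "card {a..b} = b - a + 1" using basics by simp
  have "mset_set (inner_faces n D) = add_mset {a..b} (mset_set ((`) e ` inner_faces n' D'))"
    unfolding faces_eq using ab_notin inner_faces_fin by simp
  also have "mset_set ((`) e ` inner_faces n' D') = image_mset ((`) e) (mset_set (inner_faces n' D'))"
    using image_mset_mset_set[OF inj] by simp
  finally have "fsz n D = add_mset (card {a..b}) (image_mset (card \<circ> (`) e) (mset_set (inner_faces n' D')))"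
    by (simp add: fsz_def multiset.map_comp)
  also have "image_mset (card \<circ> (`) e) (mset_set (inner_faces n' D')) = image_mset card (mset_set (inner_faces n' D'))"
    using e_inj by (intro image_mset_cong) (simp add: card_image inj_on_subset)
  finally show ?thesis using cab by (simp add: fsz_def)
qed

lemma ear_exists:
  assumes D: "D \<in> dissections n" and ne: "D \<noteq> {}"
  shows "\<exists>a b. (a,b) \<in> D \<and> (\<forall>x y. (x,y) \<in> D \<longrightarrow> \<not> (a < x \<and> x < b) \<and> \<not> (a < y \<and> y < b))"
proof -
  have fin: "finite D" using diss_fin[OF D] .
  obtain q0 where q0: "q0 \<in> D" using ne by auto
  obtain p where p: "p \<in> D" "\<And>q. q \<in> D \<Longrightarrow> snd p - fst p \<le> snd q - fst q"
    using ex_has_least_nat[of "\<lambda>q. q \<in> D" q0 "\<lambda>q. snd q - fst q"] q0 by blast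
  obtain a b where ab: "p = (a,b)" by force
  have abD: "(a,b) \<in> D" using p ab by simp
  have lt: "a < b" using dissD[OF D abD] by simp
  have "\<not> (a < x \<and> x < b) \<and> \<not> (a < y \<and> y < b)" if xy: "(x,y) \<in> D" for x y
  proof -
    have xy1: "x < y" using dissD[OF D xy] by simp
    have nc: "\<not> crossing (a,b) (x,y)" "\<not> crossing (x,y) (a,b)" using D abD xy by (auto simp: dissections_def)
    have m: "b - a \<le> y - x" using p(2)[OF xy] ab by simp
    show ?thesis
    proof (intro conjI notI)
      assume h: "a < x \<and> x < b"
      hence "y \<le> b" using nc(1) xy1 by (auto simp: crossing_def)
      thus False using h m xy1 by linarith
    next
      assume h: "a < y \<and> y < b"
      hence "a \<le> x" using nc(2) xy1 by (auto simp: crossing_def)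
      thus False using h m xy1 by linarith
    qed
  qed
  thus ?thesis using abD by blast
qed

lemma diss_struct:
  assumes "D \<in> dissections n" "n \<ge> 3"
  shows "card (inner_faces n D) = card D + 1 \<and> sum_mset (image_mset (\<lambda>k. k - 2) (fsz n D)) = n - 2
         \<and> (\<forall>k\<in>#fsz n D. k \<ge> 3)"
  using assms
proof (induction "card D" arbitrary: n D)
  case 0
  hence "D = {}" using diss_fin by auto
  thus ?case using 0 faces_empty by (simp add: fsz_def)
next
  case (Suc m)
  hence ne: "D \<noteq> {}" by auto
  obtain a b where ab: "(a,b) \<in> D" "\<And>x y. (x,y) \<in> D \<Longrightarrow> \<not> (a < x \<and> x < b) \<and> \<not> (a < y \<and> y < b)"
    using ear_exists[OF Suc.prems(1) ne] by blast
  interpret E: ear n D a b using Suc.prems ab by (unfold_locales) auto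
  have c: "card E.D' = m" using E.D'_card Suc.hyps(2) by simp
  have IH: "card (inner_faces E.n' E.D') = card E.D' + 1 \<and> sum_mset (image_mset (\<lambda>k. k - 2) (fsz E.n' E.D')) = E.n' - 2
         \<and> (\<forall>k\<in>#fsz E.n' E.D'. k \<ge> 3)"
    using Suc.hyps(1)[OF c[symmetric] E.D'_diss] E.basics by simp
  have "card (inner_faces n D) = card D + 1" using E.faces_card IH E.D'_card Suc.hyps(2) by simp
  moreover have "sum_mset (image_mset (\<lambda>k. k - 2) (fsz n D)) = n - 2"
    using IH E.basics unfolding E.fsz_eq by simp
  moreover have "\<forall>k\<in>#fsz n D. k \<ge> 3" using IH E.basics unfolding E.fsz_eq by simp
  ultimately show ?case by blast
qed

lemma fsz_size: "size (fsz n D) = card (inner_faces n D)"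
  by (simp add: fsz_def)

lemma dweight_fsz: "dweight g n D = prod_mset (image_mset g (fsz n D))"
proof -
  have "dweight g n D = prod_mset (image_mset (\<lambda>F. g (card F)) (mset_set (inner_faces n D)))"
    unfolding dweight_def by (rule prod_unfold_prod_mset)
  also have "image_mset (\<lambda>F. g (card F)) (mset_set (inner_faces n D)) = image_mset g (fsz n D)"
    unfolding fsz_def multiset.map_comp comp_def ..
  finally show ?thesis .
qed

lemma diss_card_le:
  assumes "D \<in> dissections n" "n \<ge> 3"
  shows "card D + 3 \<le> n"
proof -
  have h: "card (inner_faces n D) = card D + 1" "sum_mset (image_mset (\<lambda>k. k - 2) (fsz n D)) = n - 2"
      "\<forall>k\<in>#fsz n D. k \<ge> 3" using diss_struct[OF assms] by auto
  have "sum_mset (image_mset (\<lambda>k. 1::nat) (fsz n D)) \<le> sum_mset (image_mset (\<lambda>k. k - 2) (fsz n D))"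
    using h(3) by (intro sum_mset_mono) auto
  moreover have "size (fsz n D) = sum_mset (image_mset (\<lambda>k. 1::nat) (fsz n D))"
    by (rule size_eq_sum_mset)
  ultimately have "size (fsz n D) \<le> n - 2" using h(2) by linarith
  thus ?thesis using h(1) fsz_size assms(2) by simp
qed


lemma crossing_smono: "strict_mono (f::nat\<Rightarrow>nat) \<Longrightarrow> crossing (f p, f q) (f r, f s) = crossing (p,q) (r,s)"
  unfolding crossing_def using strict_mono_less by blast

lemma fsz_empty: "n \<ge> 3 \<Longrightarrow> fsz n {} = {#n#}"
  using faces_empty by (simp add: fsz_def)

lemma realize_step:
  assumes D': "D' \<in> dissections n'" and n': "n' \<ge> 3" and d: "d \<ge> 1"
  shows "\<exists>D\<in>dissections (n' + d). fsz (n' + d) D = add_mset (d + 2) (fsz n' D')"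
proof -
  define n where "n = n' + d"
  define e where "e = (\<lambda>j::nat. if j \<le> 0 then j else j + d)"
  define D where "D = insert (0, d+1) (map_prod e e ` D')"
  have es: "strict_mono e" unfolding strict_mono_def e_def by auto
  have elt: "\<And>u v. e u < e v \<longleftrightarrow> u < v" using strict_mono_less[OF es] .
  have eeq: "\<And>u v. e u = e v \<longleftrightarrow> u = v" using strict_mono_eq[OF es] .
  have eout: "\<And>u. \<not> (0 < e u \<and> e u < d + 1)" by (auto simp: e_def)
  have img: "\<And>p. p \<in> map_prod e e ` D' \<Longrightarrow> \<exists>u v. p = (e u, e v) \<and> (u,v) \<in> D'" by auto
  have Ddiag: "D \<subseteq> diagonals n"
  proof
    fix p assume p: "p \<in> D"
    show "p \<in> diagonals n"
    proof (cases "p = (0, d+1)")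
      case True thus ?thesis using n' d by (auto simp: diagonals_def poly_sides_iff n_def)
    next
      case False
      then obtain u v where uv: "p = (e u, e v)" "(u,v) \<in> D'" using p img unfolding D_def by blast
      have h: "u < v" "v < n'" "(u,v) \<notin> poly_sides n'" using dissD[OF D' uv(2)] by auto
      have "e u < e v" using h elt by simp
      moreover have "e v < n" using h by (auto simp: e_def n_def)
      moreover have "(e u, e v) \<notin> poly_sides n"
      proof
        assume "(e u, e v) \<in> poly_sides n"
        hence "(e u + 1 = e v \<and> e v < n) \<or> (e u = 0 \<and> e v = n - 1)" by (simp add: poly_sides_iff)
        thus False
        proof
          assume h1: "e u + 1 = e v \<and> e v < n"
          show False
          proof (cases "u = 0")
            case True thus False using h1 h d by (auto simp: e_def)
          next
            case False
            hence "v = u + 1" using h1 h by (auto simp: e_def)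
            thus False using h by (auto simp: poly_sides_iff)
          qed
        next
          assume h1: "e u = 0 \<and> e v = n - 1"
          hence "u = 0" "v = n' - 1" using h d by (auto simp: e_def n_def split: if_splits)
          thus False using h by (auto simp: poly_sides_iff)
        qed
      qed
      ultimately show ?thesis using uv by (auto simp: diagonals_def)
    qed
  qed
  have Dnc: "\<forall>p\<in>D. \<forall>q\<in>D. \<not> crossing p q"
  proof (intro ballI)
    fix p q assume p: "p \<in> D" and q: "q \<in> D"
    have P: "p = (0, d+1) \<or> (\<exists>u v. p = (e u, e v) \<and> (u,v) \<in> D')" using p img unfolding D_def by blast
    have Q: "q = (0, d+1) \<or> (\<exists>u v. q = (e u, e v) \<and> (u,v) \<in> D')" using q img unfolding D_def by blast
    show "\<not> crossing p q"
    proof (cases "p = (0, d+1)")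
      case pT: True
      show ?thesis
      proof (cases "q = (0, d+1)")
        case True thus ?thesis using pT by (simp add: crossing_def)
      next
        case False
        then obtain u v where "q = (e u, e v)" using Q by blast
        thus ?thesis using pT eout[of u] by (auto simp: crossing_def)
      qed
    next
      case pF: False
      then obtain u v where uv: "p = (e u, e v)" "(u,v) \<in> D'" using P by blast
      show ?thesis
      proof (cases "q = (0, d+1)")
        case True thus ?thesis using uv eout[of u] by (auto simp: crossing_def)
      next
        case False
        then obtain u2 v2 where uv2: "q = (e u2, e v2)" "(u2,v2) \<in> D'" using Q by blast
        have "\<not> crossing (u,v) (u2,v2)" using D' uv uv2 by (auto simp: dissections_def)
        thus ?thesis using uv uv2 crossing_smono[OF es] by simp
      qed
    qed
  qed
  have Dd: "D \<in> dissections n" using Ddiag Dnc by (simp add: dissections_def)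
  have n3: "n \<ge> 3" using n' by (simp add: n_def)
  have clear: "\<And>x y. (x,y) \<in> D \<Longrightarrow> \<not> (0 < x \<and> x < d + 1) \<and> \<not> (0 < y \<and> y < d + 1)"
  proof -
    fix x y assume xy: "(x,y) \<in> D"
    show "\<not> (0 < x \<and> x < d + 1) \<and> \<not> (0 < y \<and> y < d + 1)"
    proof (cases "(x,y) = (0, d+1)")
      case True thus ?thesis by simp
    next
      case False
      then obtain u v where "(x,y) = (e u, e v)" using xy img unfolding D_def by blast
      thus ?thesis using eout by auto
    qed
  qed
  interpret E: ear n D 0 "d+1" using Dd n3 clear by unfold_locales (auto simp: D_def)
  have Ed: "E.d = d" unfolding E.d_def by simp
  have En: "E.n' = n'" using E.basics(7) Ed n_def by simp
  have Ee: "E.e = e" unfolding E.e_def Ed e_def by (rule ext) simp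
  have ED: "E.D' = D'"
  proof -
    have "(0::nat, 1::nat) \<notin> D'" using dissD[OF D'] n' by (auto simp: poly_sides_iff)
    moreover have "(e u, e v) \<in> D \<longleftrightarrow> (u,v) = (0,1) \<or> (u,v) \<in> D'" for u v
    proof -
      have "(e u, e v) = (0, d+1) \<longleftrightarrow> (u,v) = (0,1)" using d by (auto simp: e_def)
      moreover have "(e u, e v) \<in> map_prod e e ` D' \<longleftrightarrow> (u,v) \<in> D'" using eeq by auto
      ultimately show ?thesis by (auto simp: D_def)
    qed
    ultimately show ?thesis unfolding E.D'_def Ee by auto
  qed
  have "fsz n D = add_mset (d + 2) (fsz n' D')" using E.fsz_eq unfolding En ED by simp
  thus ?thesis using Dd unfolding n_def by blast
qed

lemma realize:
  assumes "\<forall>k\<in>#M. k \<ge> 3" "M \<noteq> {#}" "sum_mset (image_mset (\<lambda>k. k - 2) M) + 2 = n"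
  shows "\<exists>D\<in>dissections n. fsz n D = M"
  using assms
proof (induction M arbitrary: n)
  case empty thus ?case by simp
next
  case (add s M')
  show ?case
  proof (cases "M' = {#}")
    case True
    hence "n = s" using add.prems by simp
    hence "fsz n {} = add_mset s M'" using True add.prems fsz_empty by auto
    moreover have "{} \<in> dissections n" by (simp add: dissections_def)
    ultimately show ?thesis by blast
  next
    case False
    define n' where "n' = sum_mset (image_mset (\<lambda>k. k - 2) M') + 2"
    obtain k where k: "k \<in># M'" using False by (meson multiset_nonemptyE)
    have "k - 2 \<le> sum_mset (image_mset (\<lambda>k. k - 2) M')" using k
      by (metis insert_DiffM sum_mset.insert le_add1)
    moreover have "k \<ge> 3" using k add.prems by simp
    ultimately have n'3: "n' \<ge> 3" by (simp add: n'_def)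
    obtain D' where D': "D' \<in> dissections n'" "fsz n' D' = M'"
      using add.IH[of n'] add.prems False n'_def by auto
    have s3: "s \<ge> 3" using add.prems by simp
    have nn: "n = n' + (s - 2)" using add.prems by (simp add: n'_def)
    have e1: "s - 2 + 2 = s" "n' + (s - 2) = n" using s3 nn by auto
    have "1 \<le> s - 2" using s3 by simp
    from realize_step[OF D'(1) n'3 this, unfolded e1]
    show ?thesis using D'(2) by simp
  qed
qed


definition odg :: "(nat \<times> nat) set \<Rightarrow> nat \<Rightarrow> nat" where "odg D v = card {y. (v,y) \<in> D}"
definition idg :: "(nat \<times> nat) set \<Rightarrow> nat \<Rightarrow> nat" where "idg D v = card {x. (x,v) \<in> D}"

lemma odg_pos: "finite D \<Longrightarrow> 0 < odg D v \<longleftrightarrow> (\<exists>y. (v,y) \<in> D)"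
proof -
  assume f: "finite D"
  have "finite {y. (v,y) \<in> D}" using finite_imageI[OF f, of snd] by (rule finite_subset[rotated]) force
  thus ?thesis by (auto simp: odg_def card_gt_0_iff)
qed

lemma idg_pos: "finite D \<Longrightarrow> 0 < idg D v \<longleftrightarrow> (\<exists>x. (x,v) \<in> D)"
proof -
  assume f: "finite D"
  have "finite {x. (x,v) \<in> D}" using finite_imageI[OF f, of fst] by (rule finite_subset[rotated]) force
  thus ?thesis by (auto simp: idg_def card_gt_0_iff)
qed

lemma odg_remove: "finite D \<Longrightarrow> (a,b) \<in> D \<Longrightarrow> odg (D - {(a,b)}) v = (if v = a then odg D v - 1 else odg D v)"
proof -
  assume f: "finite D" and ab: "(a,b) \<in> D"
  have fin: "finite {y. (v,y) \<in> D}" using finite_imageI[OF f, of snd] by (rule finite_subset[rotated]) force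
  have "{y. (v,y) \<in> D - {(a,b)}} = (if v = a then {y. (v,y) \<in> D} - {b} else {y. (v,y) \<in> D})" by auto
  thus ?thesis using fin ab by (simp add: odg_def)
qed

lemma idg_remove: "finite D \<Longrightarrow> (a,b) \<in> D \<Longrightarrow> idg (D - {(a,b)}) v = (if v = b then idg D v - 1 else idg D v)"
proof -
  assume f: "finite D" and ab: "(a,b) \<in> D"
  have fin: "finite {x. (x,v) \<in> D}" using finite_imageI[OF f, of fst] by (rule finite_subset[rotated]) force
  have "{x. (x,v) \<in> D - {(a,b)}} = (if v = b then {x. (x,v) \<in> D} - {a} else {x. (x,v) \<in> D})" by auto
  thus ?thesis using fin ab by (simp add: idg_def)
qed

lemma diss_remove: "D \<in> dissections n \<Longrightarrow> D - {p} \<in> dissections n"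
  by (auto simp: dissections_def)

definition firstb :: "(nat \<times> nat) set \<Rightarrow> nat" where "firstb D = (LEAST v. 0 < idg D v)"
definition lasta :: "(nat \<times> nat) set \<Rightarrow> nat" where "lasta D = Max {v. v < firstb D \<and> 0 < odg D v}"

lemma first_edge:
  assumes D: "D \<in> dissections n" and ne: "D \<noteq> {}"
  shows "(lasta D, firstb D) \<in> D"
proof -
  have f: "finite D" using diss_fin[OF D] .
  obtain x0 y0 where p0: "(x0,y0) \<in> D" using ne by auto
  have ex: "0 < idg D y0" using idg_pos[OF f] p0 by auto
  define b where "b = firstb D"
  have bpos: "0 < idg D b" unfolding b_def firstb_def using ex by (rule LeastI)
  have bleast: "\<And>v. 0 < idg D v \<Longrightarrow> b \<le> v" unfolding b_def firstb_def by (rule Least_le)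
  obtain a0 where a0: "(a0, b) \<in> D" using bpos idg_pos[OF f] by auto
  have a0b: "a0 < b" using dissD[OF D a0] by simp
  have a0o: "0 < odg D a0" using odg_pos[OF f] a0 by auto
  define A where "A = {v. v < b \<and> 0 < odg D v}"
  have Af: "finite A" unfolding A_def by auto
  have a0A: "a0 \<in> A" using a0b a0o by (simp add: A_def)
  define a where "a = Max A"
  have aA: "a \<in> A" unfolding a_def using Af a0A by (intro Max_in) auto
  have a0a: "a0 \<le> a" unfolding a_def using Af a0A by simp
  obtain j where j: "(a,j) \<in> D" using aA odg_pos[OF f] by (auto simp: A_def)
  have "0 < idg D j" using idg_pos[OF f] j by auto
  hence bj: "b \<le> j" using bleast by simp
  have "(a, b) \<in> D"
  proof (cases "a0 = a")
    case True thus ?thesis using a0 by simp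
  next
    case False
    hence lt: "a0 < a" using a0a by simp
    have "j = b"
    proof (rule ccontr)
      assume "j \<noteq> b"
      hence bj2: "b < j" using bj by simp
      have "a < b" using aA by (simp add: A_def)
      hence "crossing (a0,b) (a,j)" using bj2 lt by (simp add: crossing_def)
      thus False using D a0 j by (auto simp: dissections_def)
    qed
    thus ?thesis using j by simp
  qed
  thus ?thesis unfolding a_def A_def lasta_def b_def by simp
qed


lemma deg_inj:
  assumes "D1 \<in> dissections n" "D2 \<in> dissections n" "odg D1 = odg D2" "idg D1 = idg D2"
  shows "D1 = D2"
  using assms
proof (induction "card D1" arbitrary: D1 D2)
  case 0
  have f1: "finite D1" "finite D2" using diss_fin 0 by auto
  have e1: "D1 = {}" using 0 f1 by simp
  have "D2 = {}"
  proof (rule ccontr)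
    assume "D2 \<noteq> {}"
    then obtain x y where "(x,y) \<in> D2" by auto
    hence "0 < odg D2 x" using odg_pos[OF f1(2)] by auto
    moreover have "odg D1 x = 0" using e1 by (simp add: odg_def)
    ultimately show False using \<open>odg D1 = odg D2\<close> by simp
  qed
  thus ?case using e1 by simp
next
  case (Suc m)
  have f1: "finite D1" "finite D2" using diss_fin Suc.prems by auto
  have ne1: "D1 \<noteq> {}" using Suc.hyps(2) by auto
  have ne2: "D2 \<noteq> {}"
  proof
    assume e2: "D2 = {}"
    obtain x y where "(x,y) \<in> D1" using ne1 by auto
    hence "0 < odg D1 x" using odg_pos[OF f1(1)] by auto
    thus False using Suc.prems(3) e2 by (simp add: odg_def)
  qed
  have fb: "firstb D1 = firstb D2" using Suc.prems(4) by (simp add: firstb_def)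
  have la: "lasta D1 = lasta D2" using Suc.prems(3) fb by (simp add: lasta_def)
  define p where "p = (lasta D1, firstb D1)"
  have p1: "p \<in> D1" unfolding p_def using first_edge[OF Suc.prems(1) ne1] .
  have p2: "p \<in> D2" unfolding p_def la fb using first_edge[OF Suc.prems(2) ne2] .
  obtain a b where ab: "p = (a,b)" by force
  have "odg (D1 - {p}) = odg (D2 - {p})" using odg_remove[OF f1(1)] odg_remove[OF f1(2)] p1 p2 Suc.prems(3) ab
    by auto
  moreover have "idg (D1 - {p}) = idg (D2 - {p})" using idg_remove[OF f1(1)] idg_remove[OF f1(2)] p1 p2 Suc.prems(4) ab
    by auto
  moreover have "m = card (D1 - {p})" using Suc.hyps(2) p1 f1 by simp
  ultimately have "D1 - {p} = D2 - {p}" using Suc.hyps(1) diss_remove Suc.prems by blast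
  thus ?case using p1 p2 by blast
qed

lemma lists_fin: "finite {xs::nat list. length xs = k \<and> sum_list xs \<le> m}"
proof -
  have "{xs::nat list. length xs = k \<and> sum_list xs \<le> m} \<subseteq> {xs. set xs \<subseteq> {..m} \<and> length xs = k}"
  proof
    fix xs :: "nat list" assume h: "xs \<in> {xs. length xs = k \<and> sum_list xs \<le> m}"
    have "\<And>x. x \<in> set xs \<Longrightarrow> x \<le> m" using h member_le_sum_list[of _ xs] by fastforce
    thus "xs \<in> {xs. set xs \<subseteq> {..m} \<and> length xs = k}" using h by auto
  qed
  moreover have "finite {xs. set xs \<subseteq> {..m::nat} \<and> length xs = k}" by (rule finite_lists_length_eq) simp
  ultimately show ?thesis by (rule finite_subset)
qed

lemma lists_bound: "card {xs::nat list. length xs = k \<and> sum_list xs \<le> m} \<le> 2^(k+m)"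
proof (induction "k+m" arbitrary: k m rule: less_induct)
  case less
  show ?case
  proof (cases k)
    case 0
    hence "{xs::nat list. length xs = k \<and> sum_list xs \<le> m} = {[]}" by auto
    thus ?thesis by simp
  next
    case (Suc k')
    define S where "S = (\<lambda>k m. {xs::nat list. length xs = k \<and> sum_list xs \<le> m})"
    have sub: "S k m \<subseteq> (Cons 0) ` S k' m \<union> (if m = 0 then {} else (\<lambda>ys. (hd ys + 1) # tl ys) ` S k (m - 1))"
    proof
      fix xs assume xs: "xs \<in> S k m"
      then obtain x ys where xys: "xs = x # ys" "length ys = k'" using Suc by (cases xs) (auto simp: S_def)
      show "xs \<in> (Cons 0) ` S k' m \<union> (if m = 0 then {} else (\<lambda>ys. (hd ys + 1) # tl ys) ` S k (m - 1))"
      proof (cases x)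
        case 0 thus ?thesis using xs xys by (auto simp: S_def)
      next
        case (Suc x')
        hence "m \<noteq> 0" using xs xys by (auto simp: S_def)
        moreover have mem: "(x' # ys) \<in> S k (m - 1)" using xs xys Suc \<open>k = Suc k'\<close> by (auto simp: S_def)
        moreover have xe: "xs = (\<lambda>ys. (hd ys + 1) # tl ys) (x' # ys)" using xys Suc by simp
        have "xs \<in> (\<lambda>ys. (hd ys + 1) # tl ys) ` S k (m - 1)" by (subst xe) (rule imageI[OF mem])
        thus ?thesis using \<open>m \<noteq> 0\<close> by simp
      qed
    qed
    have c1: "card ((Cons 0) ` S k' m) \<le> 2^(k'+m)"
    proof -
      have "card ((Cons 0) ` S k' m) \<le> card (S k' m)" unfolding S_def by (rule card_image_le[OF lists_fin])
      also have "\<dots> \<le> 2^(k'+m)" using less[of k' m] Suc unfolding S_def by simp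
      finally show ?thesis .
    qed
    have c2: "card (if m = 0 then {} else (\<lambda>ys. (hd ys + 1) # tl ys) ` S k (m - 1)) \<le> 2^(k'+m)"
    proof (cases "m = 0")
      case True thus ?thesis by simp
    next
      case False
      have "card ((\<lambda>ys. (hd ys + 1) # tl ys) ` S k (m - 1)) \<le> card (S k (m-1))"
        using card_image_le[OF lists_fin[of k "m - 1"]] unfolding S_def .
      also have "\<dots> \<le> 2^(k + (m-1))" using less[of k "m-1"] False unfolding S_def by simp
      finally show ?thesis using False Suc by simp
    qed
    have "card (S k m) \<le> card ((Cons 0) ` S k' m \<union> (if m = 0 then {} else (\<lambda>ys. (hd ys + 1) # tl ys) ` S k (m - 1)))"
      using sub lists_fin unfolding S_def by (intro card_mono) auto
    also have "\<dots> \<le> 2^(k'+m) + 2^(k'+m)" using card_Un_le c1 c2 by (meson add_mono le_trans)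
    also have "\<dots> = 2^(k+m)" using Suc by simp
    finally show ?thesis unfolding S_def .
  qed
qed

lemma odg_sum: "D \<in> dissections n \<Longrightarrow> (\<Sum>v<n. odg D v) = card D"
proof -
  assume D: "D \<in> dissections n"
  have f: "finite D" using diss_fin[OF D] .
  define Sg where "Sg = Sigma {..<n} (\<lambda>v. {y. (v,y) \<in> D})"
  have e: "D = Sg"
  proof
    show "D \<subseteq> Sg"
    proof
      fix p assume p: "p \<in> D"
      obtain x y where xy: "p = (x,y)" by force
      have "x < n" using dissD[OF D p[unfolded xy]] by simp
      thus "p \<in> Sg" using p xy by (simp add: Sg_def)
    qed
  qed (auto simp: Sg_def)
  have "\<forall>v\<in>{..<n}. finite {y. (v,y) \<in> D}"
    using finite_imageI[OF f, of snd] by (intro ballI, rule finite_subset[rotated]) force+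
  hence "card Sg = (\<Sum>v<n. card {y. (v,y) \<in> D})" unfolding Sg_def by simp
  thus ?thesis using e by (simp add: odg_def)
qed

lemma idg_sum: "D \<in> dissections n \<Longrightarrow> (\<Sum>v<n. idg D v) = card D"
proof -
  assume D: "D \<in> dissections n"
  have f: "finite D" using diss_fin[OF D] .
  define Sg where "Sg = Sigma {..<n} (\<lambda>v. {x. (x,v) \<in> D})"
  have e: "D = (\<lambda>(v,x). (x,v)) ` Sg"
  proof
    show "D \<subseteq> (\<lambda>(v,x). (x,v)) ` Sg"
    proof
      fix p assume p: "p \<in> D"
      obtain x y where xy: "p = (x,y)" by force
      have "y < n" using dissD[OF D p[unfolded xy]] by simp
      hence "(y,x) \<in> Sg" using p xy by (simp add: Sg_def)
      thus "p \<in> (\<lambda>(v,x). (x,v)) ` Sg" using xy by force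
    qed
  qed (auto simp: Sg_def)
  have inj: "inj_on (\<lambda>(v,x). (x,v)) Sg" by (auto intro: inj_onI)
  have "\<forall>v\<in>{..<n}. finite {x. (x,v) \<in> D}"
    using finite_imageI[OF f, of fst] by (intro ballI, rule finite_subset[rotated]) force+
  hence "card Sg = (\<Sum>v<n. card {x. (x,v) \<in> D})" unfolding Sg_def by simp
  moreover have "card ((\<lambda>(v,x). (x,v)) ` Sg) = card Sg" using card_image[OF inj] .
  ultimately show ?thesis using e by (simp add: idg_def)
qed

lemma diss_count: "n \<ge> 3 \<Longrightarrow> real (card (dissections n)) \<le> 16 ^ n"
proof -
  assume n: "n \<ge> 3"
  define L where "L = {xs::nat list. length xs = n \<and> sum_list xs \<le> n}"
  define F where "F = (\<lambda>D. (map (odg D) [0..<n], map (idg D) [0..<n]))"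
  have zero: "D \<in> dissections n \<Longrightarrow> v \<ge> n \<Longrightarrow> odg D v = 0 \<and> idg D v = 0" for D v
  proof -
    assume D: "D \<in> dissections n" and v: "v \<ge> n"
    have "{y. (v,y) \<in> D} = {}" using dissD[OF D] v by fastforce
    moreover have "{x. (x,v) \<in> D} = {}" using dissD[OF D] v by fastforce
    ultimately show ?thesis by (simp add: odg_def idg_def)
  qed
  have inj: "inj_on F (dissections n)"
  proof (rule inj_onI)
    fix D1 D2 assume D1: "D1 \<in> dissections n" and D2: "D2 \<in> dissections n" and eq: "F D1 = F D2"
    have "odg D1 v = odg D2 v \<and> idg D1 v = idg D2 v" for v
    proof (cases "v < n")
      case True
      show ?thesis using eq True by (simp add: F_def)
    next
      case False thus ?thesis using zero[OF D1] zero[OF D2] by simp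
    qed
    thus "D1 = D2" using deg_inj[OF D1 D2] by auto
  qed
  have img: "F ` dissections n \<subseteq> L \<times> L"
  proof
    fix p assume "p \<in> F ` dissections n"
    then obtain D where D: "D \<in> dissections n" "p = F D" by auto
    have cD: "card D \<le> n" using diss_card_le[OF D(1) n] by simp
    have "sum_list (map (odg D) [0..<n]) = (\<Sum>v<n. odg D v)" by (simp add: sum_list_sum_nth atLeast0LessThan)
    moreover have "sum_list (map (idg D) [0..<n]) = (\<Sum>v<n. idg D v)" by (simp add: sum_list_sum_nth atLeast0LessThan)
    ultimately show "p \<in> L \<times> L" using D odg_sum[OF D(1)] idg_sum[OF D(1)] cD by (auto simp: L_def F_def)
  qed
  have "card (dissections n) = card (F ` dissections n)" using card_image[OF inj] by simp
  also have "\<dots> \<le> card (L \<times> L)" using img lists_fin unfolding L_def by (intro card_mono) auto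
  also have "\<dots> = card L * card L" by (simp add: card_cartesian_product)
  also have "\<dots> \<le> 2^(n+n) * 2^(n+n)" using lists_bound[of n n] unfolding L_def by (intro mult_mono) auto
  also have "\<dots> = 16 ^ n" by (simp add: power_add flip: power_mult_distrib)
  finally show ?thesis by (metis of_nat_le_iff of_nat_numeral of_nat_power)
qed


lemma big_weight:
  fixes g :: "nat \<Rightarrow> real"
  assumes nn: "\<And>k. k \<ge> 3 \<Longrightarrow> g k \<ge> 0"
    and cr: "conv_radius (\<lambda>k. if k \<ge> 1 then g (k + 2) else 0) = 0" and H: "H \<ge> 1"
  shows "\<exists>L\<ge>1. g (L + 2) \<ge> H ^ L"
proof (rule ccontr)
  assume "\<not> (\<exists>L\<ge>1. g (L + 2) \<ge> H ^ L)"
  hence lt: "\<And>L. L \<ge> 1 \<Longrightarrow> g (L + 2) < H ^ L" by (meson not_le)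
  define f where "f = (\<lambda>k::nat. if k \<ge> 1 then g (k + 2) else 0)"
  define z where "z = 1 / (2 * H)"
  have zpos: "z > 0" using H by (simp add: z_def)
  have b: "norm (f k * z ^ k) \<le> (1/2) ^ k" for k
  proof (cases "k \<ge> 1")
    case True
    have g0: "0 \<le> g (k+2)" using nn[of "k+2"] True by simp
    have "norm (f k * z ^ k) = g (k+2) * z ^ k" using True g0 zpos by (simp add: f_def abs_mult)
    also have "\<dots> \<le> H ^ k * z ^ k" using lt[OF True] zpos by (intro mult_right_mono) auto
    also have "\<dots> = (H * z) ^ k" by (simp add: power_mult_distrib)
    also have "H * z = 1/2" using H by (simp add: z_def)
    finally show ?thesis .
  next
    case False thus ?thesis by (simp add: f_def)
  qed
  have "summable (\<lambda>k. f k * z ^ k)"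
    by (rule summable_comparison_test'[where g = "\<lambda>k. (1/2::real)^k"]) (use b in \<open>auto intro: summable_geometric\<close>)
  hence "conv_radius f \<ge> norm z" by (rule conv_radius_geI)
  moreover have "conv_radius f = 0" using cr by (simp add: f_def)
  ultimately show False using zpos by simp
qed

lemma size_count_sum: "size (M::nat multiset) = sum (count M) (set_mset M)"
  by (simp add: size_multiset_overloaded_eq)

lemma pigeon:
  fixes M :: "nat multiset" and dl :: real
  assumes ge3: "\<forall>k\<in>#M. k \<ge> 3" and sm: "sum_mset (image_mset (\<lambda>k. k - 2) M) \<le> n"
    and sz: "real (size M) \<ge> dl * n" and dl: "dl > 0" and s0: "s0 \<ge> 3" "real (s0 - 2) \<ge> 2 / dl"
  shows "\<exists>s. 3 \<le> s \<and> s \<le> s0 \<and> real (count M s) \<ge> dl * n / (2 * (s0 - 2))"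
proof (rule ccontr)
  assume "\<not> ?thesis"
  hence lt: "\<And>s. 3 \<le> s \<Longrightarrow> s \<le> s0 \<Longrightarrow> real (count M s) < dl * n / (2 * (s0 - 2))" by force
  define T where "T = filter_mset (\<lambda>k. s0 < k) M"
  define N where "N = filter_mset (\<lambda>k. \<not> s0 < k) M"
  have part: "M = T + N" unfolding T_def N_def by (rule multiset_partition)
  have "sum_mset (image_mset (\<lambda>k. s0 - 2) T) \<le> sum_mset (image_mset (\<lambda>k. k - 2) T)"
    by (intro sum_mset_mono) (auto simp: T_def)
  also have "\<dots> \<le> sum_mset (image_mset (\<lambda>k. k - 2) M)" using part
    by (metis image_mset_union le_add1 sum_mset.union)
  finally have "size T * (s0 - 2) \<le> n" using sm by simp
  hence "real (size T) * real (s0 - 2) \<le> real n" by (metis of_nat_le_iff of_nat_mult)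
  moreover have "real (s0 - 2) > 0" using s0 by simp
  ultimately have "real (size T) \<le> real n / real (s0 - 2)" by (simp add: field_simps)
  also have "\<dots> \<le> real n / (2 / dl)" using s0 dl by (intro divide_left_mono) auto
  also have "\<dots> = dl * n / 2" by simp
  finally have T: "real (size T) \<le> dl * n / 2" .
  have "size N = sum (count N) (set_mset N)" by (rule size_count_sum)
  also have "\<dots> \<le> sum (count N) {3..s0}"
    using ge3 by (intro sum_mono2) (auto simp: N_def)
  also have "\<dots> \<le> sum (count M) {3..s0}" by (intro sum_mono) (auto simp: N_def)
  finally have "real (size N) \<le> (\<Sum>s\<in>{3..s0}. real (count M s))" by (metis of_nat_le_iff of_nat_sum)
  also have "\<dots> < (\<Sum>s\<in>{3..s0}. dl * n / (2 * (s0 - 2)))"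
    using lt s0 by (intro sum_strict_mono) auto
  also have "\<dots> = real (s0 - 2) * (dl * n / (2 * (s0 - 2)))" using s0 by simp
  also have "\<dots> = dl * n / 2" using s0 by (simp add: field_simps)
  finally have "real (size N) < dl * n / 2" .
  hence "real (size M) < dl * n" using T part by simp
  thus False using sz by simp
qed


lemma pos_nonneg: "\<forall>k\<in>#N. (g::nat\<Rightarrow>real) k \<ge> 0 \<Longrightarrow> prod_mset (image_mset g N) \<ge> 0"
  by (induction N) auto

lemma surgery:
  fixes g :: "nat \<Rightarrow> real" and M :: "nat multiset"
  assumes pos: "\<forall>k\<in>#M. g k > 0" and ge3: "\<forall>k\<in>#M. k \<ge> 3"
    and s: "3 \<le> s" and L: "L \<ge> 1" and q: "q * L \<le> count M s" and q1: "q \<ge> 1"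
    and gL: "g (L+2) \<ge> (rho * g s) ^ L" and gL1: "g (L+2) \<ge> 1" and rho: "rho \<ge> 0"
  shows "\<exists>M'. (\<forall>k\<in>#M'. k \<ge> 3) \<and> M' \<noteq> {#} \<and>
     sum_mset (image_mset (\<lambda>k. k - 2) M') = sum_mset (image_mset (\<lambda>k. k - 2) M) \<and>
     prod_mset (image_mset g M') \<ge> rho ^ (q * L) * prod_mset (image_mset g M)"
proof -
  define r where "r = q * L"
  define a where "a = q * (s - 2)"
  define R where "R = replicate_mset r s"
  define A where "A = replicate_mset a (L + 2)"
  define M' where "M' = (M - R) + A"
  have RM: "R \<subseteq># M" unfolding R_def r_def using q by (simp add: count_le_replicate_mset_subset_eq[symmetric])
  have MR: "M = (M - R) + R" using RM by (simp add: subset_mset.diff_add)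
  have g3: "\<forall>k\<in>#M'. k \<ge> 3" unfolding M'_def A_def using ge3 L by (auto dest: in_diffD)
  have ne: "M' \<noteq> {#}" using s q1 by (auto simp: M'_def A_def a_def)
  have sum_eq: "sum_mset (image_mset (\<lambda>k. k - 2) M') = sum_mset (image_mset (\<lambda>k. k - 2) M)"
  proof -
    have "sum_mset (image_mset (\<lambda>k. k - 2) M) = sum_mset (image_mset (\<lambda>k. k - 2) (M - R)) + r * (s - 2)"
      by (subst MR) (simp add: R_def)
    moreover have "sum_mset (image_mset (\<lambda>k. k - 2) M') = sum_mset (image_mset (\<lambda>k. k - 2) (M - R)) + a * L"
      by (simp add: M'_def A_def)
    ultimately show ?thesis by (simp add: r_def a_def)
  qed
  have gs: "g s > 0"
  proof -
    have "q * L \<ge> 1" using q1 L by simp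
    hence "0 < count M s" using q by linarith
    hence "s \<in># M" by (rule count_greater_zero_iff[THEN iffD1])
    thus ?thesis using pos by simp
  qed
  have pM: "prod_mset (image_mset g M) = prod_mset (image_mset g (M - R)) * g s ^ r"
    by (subst MR) (simp add: R_def)
  have pM': "prod_mset (image_mset g M') = prod_mset (image_mset g (M - R)) * g (L+2) ^ a"
    by (simp add: M'_def A_def)
  have P0: "prod_mset (image_mset g (M - R)) \<ge> 0"
    using pos_nonneg[of "M - R"] pos by (auto dest: in_diffD intro: less_imp_le)
  have "g (L+2) ^ a \<ge> g (L+2) ^ q" using gL1 s by (intro power_increasing) (auto simp: a_def)
  moreover have "g (L+2) ^ q \<ge> ((rho * g s) ^ L) ^ q" using gL rho gs by (intro power_mono) auto
  moreover have "((rho * g s) ^ L) ^ q = rho ^ r * g s ^ r"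
    by (simp add: r_def power_mult power_mult_distrib mult.commute)
  ultimately have "g (L+2) ^ a \<ge> rho ^ r * g s ^ r" by linarith
  hence "prod_mset (image_mset g M') \<ge> prod_mset (image_mset g (M - R)) * (rho ^ r * g s ^ r)"
    using pM' P0 by (simp add: mult_left_mono)
  also have "prod_mset (image_mset g (M - R)) * (rho ^ r * g s ^ r) = rho ^ r * prod_mset (image_mset g M)"
    using pM by (simp add: algebra_simps)
  finally show ?thesis using g3 ne sum_eq unfolding r_def by blast
qed


lemma dweight_nonneg:
  assumes nn: "\<And>k. k \<ge> 3 \<Longrightarrow> g k \<ge> 0"
  shows "dweight g n D \<ge> 0"
  unfolding dweight_def using nn face_card by (intro prod_nonneg) auto

lemma tw_ge:
  assumes nn: "\<And>k. k \<ge> 3 \<Longrightarrow> g k \<ge> 0" and D: "D \<in> dissections n"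
  shows "dweight g n D \<le> total_weight g n"
proof -
  have fin: "finite (dissections n)"
  proof -
    have "dissections n \<subseteq> Pow (diagonals n)" by (auto simp: dissections_def)
    moreover have "finite (diagonals n)"
      by (rule finite_subset[of _ "{..<n} \<times> {..<n}"]) (auto simp: diagonals_def)
    ultimately show ?thesis by (meson finite_Pow_iff finite_subset)
  qed
  show ?thesis unfolding total_weight_def
    using D fin dweight_nonneg[OF nn] by (intro member_le_sum) auto
qed

lemma prod_pos_each: "prod_mset (image_mset (g::nat\<Rightarrow>real) N) \<noteq> 0 \<Longrightarrow> \<forall>k\<in>#N. g k \<noteq> 0"
  by (induction N) auto

lemma many_diag_small:
  fixes g :: "nat \<Rightarrow> real" and dl :: real
  assumes nn: "\<And>k. k \<ge> 3 \<Longrightarrow> g k \<ge> 0"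
    and cr: "conv_radius (\<lambda>k. if k \<ge> 1 then g (k + 2) else 0) = 0" and dl: "dl > 0"
  shows "\<exists>N. \<forall>n\<ge>N. \<forall>D\<in>dissections n. real (card D) \<ge> dl * n \<longrightarrow> dweight g n D * 32 ^ n \<le> total_weight g n"
proof -
  define s0 where "s0 = nat \<lceil>2 / dl\<rceil> + 3"
  have s03: "s0 \<ge> 3" by (simp add: s0_def)
  have s0r: "real (s0 - 2) \<ge> 2 / dl"
  proof -
    have "s0 - 2 = nat \<lceil>2 / dl\<rceil> + 1" by (simp add: s0_def)
    moreover have "2 / dl \<le> real (nat \<lceil>2 / dl\<rceil>)" by (rule real_nat_ceiling_ge)
    ultimately show ?thesis by simp
  qed
  have s0p: "real (s0 - 2) > 0" using s03 by simp
  define be where "be = dl / (2 * (s0 - 2))"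
  have bep: "be > 0" using dl s0p by (simp add: be_def)
  define K where "K = nat \<lceil>2 / be\<rceil>"
  have Kr: "real K \<ge> 2 / be" unfolding K_def by (rule real_nat_ceiling_ge)
  define rho :: real where "rho = 32 ^ K"
  have rho1: "rho \<ge> 1" by (simp add: rho_def)
  define Mx where "Mx = Max (g ` {3..s0})"
  have Mx: "\<And>s. 3 \<le> s \<Longrightarrow> s \<le> s0 \<Longrightarrow> g s \<le> Mx" unfolding Mx_def by (intro Max_ge) auto
  define H where "H = rho * max 1 Mx"
  have H1: "H \<ge> 1"
  proof -
    have "1 * 1 \<le> rho * max 1 Mx" using rho1 by (intro mult_mono) auto
    thus ?thesis by (simp add: H_def)
  qed
  obtain L where L: "L \<ge> 1" "g (L + 2) \<ge> H ^ L" using big_weight[OF nn cr H1] by blast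
  define N where "N = max 3 (nat \<lceil>2 * L / be\<rceil>)"
  have "\<forall>n\<ge>N. \<forall>D\<in>dissections n. real (card D) \<ge> dl * n \<longrightarrow> dweight g n D * 32 ^ n \<le> total_weight g n"
  proof (intro allI impI ballI)
    fix n D assume nN: "n \<ge> N" and D: "D \<in> dissections n" and cD: "real (card D) \<ge> dl * n"
    have n3: "n \<ge> 3" using nN by (simp add: N_def)
    have nbe: "be * n \<ge> 2 * L"
    proof -
      have "real n \<ge> real (nat \<lceil>2 * L / be\<rceil>)" using nN unfolding N_def by simp
      moreover have "2 * L / be \<le> real (nat \<lceil>2 * L / be\<rceil>)" by (rule real_nat_ceiling_ge)
      ultimately have "real n \<ge> 2 * L / be" by linarith
      thus ?thesis using bep by (simp add: field_simps)
    qed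
    show "dweight g n D * 32 ^ n \<le> total_weight g n"
    proof (cases "dweight g n D = 0")
      case True thus ?thesis using tw_ge[of g, OF nn D] by simp
    next
      case False
      define M where "M = fsz n D"
      have st: "card (inner_faces n D) = card D + 1" "sum_mset (image_mset (\<lambda>k. k - 2) M) = n - 2"
          "\<forall>k\<in>#M. k \<ge> 3" using diss_struct[OF D n3] by (auto simp: M_def)
      have posM: "\<forall>k\<in>#M. g k > 0"
      proof -
        have ne: "\<forall>k\<in>#M. g k \<noteq> 0" using False prod_pos_each dweight_fsz unfolding M_def by metis
        show ?thesis
        proof
          fix k assume k: "k \<in># M"
          have "g k \<ge> 0" using nn[of k] st(3) k by simp
          moreover have "g k \<noteq> 0" using ne k by blast
          ultimately show "g k > 0" by linarith
        qed
      qed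
      have szM: "real (size M) \<ge> dl * n" using st(1) cD fsz_size unfolding M_def by simp
      obtain s where s: "3 \<le> s" "s \<le> s0" "real (count M s) \<ge> dl * n / (2 * (s0 - 2))"
        using pigeon[OF st(3) _ szM dl s03 s0r] st(2) by auto
      have cs: "real (count M s) \<ge> be * n" using s(3) by (simp add: be_def)
      define q where "q = count M s div L"
      have qL: "q * L \<le> count M s" by (simp add: q_def)
      have qL2: "real (q * L) + L > real (count M s)"
      proof -
        have "count M s < q * L + L" using L(1) unfolding q_def
          by (metis div_mult_mod_eq mod_less_divisor nat_add_left_cancel_less neq0_conv not_one_le_zero)
        thus ?thesis by linarith
      qed
      have q1: "q \<ge> 1"
      proof -
        have "real (count M s) \<ge> 2 * L" using cs nbe by linarith
        hence "count M s \<ge> L" by linarith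
        hence "L div L \<le> count M s div L" by (rule div_le_mono)
        thus ?thesis using L(1) by (simp add: q_def)
      qed
      have gs0: "0 \<le> g s" using nn s by simp
      have "rho * g s \<le> H" unfolding H_def using Mx[OF s(1,2)] rho1 gs0
        by (intro mult_left_mono) auto
      hence gL: "g (L+2) \<ge> (rho * g s) ^ L" using L(2) gs0 rho1 by (meson order.trans power_mono mult_nonneg_nonneg zero_le_one order.trans[OF zero_le_one rho1])
      have gL1: "g (L+2) \<ge> 1" using L(2) H1 by (meson one_le_power order.trans)
      obtain M' where M': "\<forall>k\<in>#M'. k \<ge> 3" "M' \<noteq> {#}"
          "sum_mset (image_mset (\<lambda>k. k - 2) M') = sum_mset (image_mset (\<lambda>k. k - 2) M)"
          "prod_mset (image_mset g M') \<ge> rho ^ (q * L) * prod_mset (image_mset g M)"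
        using surgery[OF posM st(3) s(1) L(1) qL q1 gL gL1] rho1 by auto
      have sM': "sum_mset (image_mset (\<lambda>k. k - 2) M') + 2 = n" using M'(3) st(2) n3 by simp
      obtain D' where D': "D' \<in> dissections n" "fsz n D' = M'"
        using realize[OF M'(1,2) sM'] by auto
      have "real (K * (q * L)) \<ge> n"
      proof -
        have "real (q * L) \<ge> be * n / 2" using qL2 cs nbe by linarith
        hence "real K * real (q * L) \<ge> (2 / be) * (be * n / 2)" using Kr bep
          by (intro mult_mono) auto
        thus ?thesis using bep by simp
      qed
      hence "K * (q * L) \<ge> n" by linarith
      hence r32: "rho ^ (q * L) \<ge> 32 ^ n" unfolding rho_def power_mult[symmetric] by (intro power_increasing) auto
      have "dweight g n D * 32 ^ n \<le> dweight g n D * rho ^ (q * L)"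
        using r32 dweight_nonneg[OF nn] by (intro mult_left_mono) auto
      also have "\<dots> \<le> dweight g n D'" using M'(4) D'(2) dweight_fsz unfolding M_def by (simp add: mult.commute)
      also have "\<dots> \<le> total_weight g n" using tw_ge[of g, OF nn D'(1)] .
      finally show ?thesis .
    qed
  qed
  thus ?thesis by blast
qed


lemma side_mod:
  assumes xy: "x < n" "y < n" "x \<noteq> y" and n: "n \<ge> 3"
  shows "(min x y, max x y) \<in> poly_sides n \<longleftrightarrow>
         (int x - int y) mod int n = 1 \<or> (int y - int x) mod int n = 1"
proof -
  have md: "\<And>d::int. - int n < d \<Longrightarrow> d < int n \<Longrightarrow> d mod int n = (if d \<ge> 0 then d else d + int n)"
  proof -
    fix d :: int assume d: "- int n < d" "d < int n"
    show "d mod int n = (if d \<ge> 0 then d else d + int n)"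
    proof (cases "d \<ge> 0")
      case True thus ?thesis using d by simp
    next
      case False
      have "d mod int n = (d + int n) mod int n" by simp
      also have "\<dots> = d + int n" using d False by (intro mod_pos_pos_trivial) auto
      finally show ?thesis using False by simp
    qed
  qed
  have m1: "(int x - int y) mod int n = (if int x \<ge> int y then int x - int y else int x - int y + int n)"
    using md[of "int x - int y"] xy by auto
  have m2: "(int y - int x) mod int n = (if int y \<ge> int x then int y - int x else int y - int x + int n)"
    using md[of "int y - int x"] xy by auto
  show ?thesis unfolding m1 m2 poly_sides_iff using xy n by (auto simp: min_def max_def) 
qed

lemma adj_nodiag:
  assumes D: "D \<in> dissections n" and nd: "nodiag D x"
  shows "adj n D x y \<longleftrightarrow> x \<noteq> y \<and> (min x y, max x y) \<in> poly_sides n"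
proof -
  have "(min x y, max x y) \<notin> D" using nd unfolding nodiag_def min_def max_def by auto
  thus ?thesis by (auto simp: adj_def edges_def)
qed

lemma adj_sym: "adj n D x y = adj n D y x"
  by (auto simp: adj_def min_def max_def)

lemma adj_lt: "D \<in> dissections n \<Longrightarrow> n \<ge> 3 \<Longrightarrow> adj n D x y \<Longrightarrow> x < n \<and> y < n"
  using edges_lt[of D n "min x y" "max x y"] by (auto simp: adj_def min_def max_def split: if_splits)

context
  fixes n :: nat and D v k
  assumes D: "D \<in> dissections n" and nk: "n \<ge> 2 * k + 3" and v: "v < n"
    and win: "\<And>j. - int k \<le> j \<Longrightarrow> j \<le> int k \<Longrightarrow> nodiag D (nat ((int v + j) mod int n))"
begin

definition P :: "int \<Rightarrow> nat" where "P j = nat ((int v + j) mod int n)"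

lemma n3: "n \<ge> 3" using nk by simp
lemma P_int: "int (P j) = (int v + j) mod int n"
  unfolding P_def using n3 by simp
lemma P_lt: "P j < n"
proof -
  have "int (P j) < int n" unfolding P_int using n3 by simp
  thus ?thesis by simp
qed
lemma P0: "P 0 = v" unfolding P_def using v by simp

lemma P_diff: "(int (P i) - int (P j)) mod int n = (i - j) mod int n"
  unfolding P_int by (simp add: mod_diff_eq)

lemma small_mod1: "-(2 * int k) \<le> d \<Longrightarrow> d \<le> 2 * int k \<Longrightarrow> d mod int n = 1 \<longleftrightarrow> d = 1"
proof -
  assume d: "-(2 * int k) \<le> d" "d \<le> 2 * int k"
  show ?thesis
  proof (cases "d \<ge> 0")
    case True
    hence "d mod int n = d" using d nk by (intro mod_pos_pos_trivial) auto
    thus ?thesis by simp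
  next
    case False
    have "d mod int n = (d + int n) mod int n" by simp
    also have "\<dots> = d + int n" using d nk False by (intro mod_pos_pos_trivial) auto
    finally show ?thesis using False d nk by auto
  qed
qed

lemma P_inj: "inj_on P {-int k..int k}"
proof (rule inj_onI)
  fix i j assume i: "i \<in> {-int k..int k}" and j: "j \<in> {-int k..int k}" and e: "P i = P j"
  have m: "(i - j) mod int n = 0" using P_diff[of i j] e by simp
  show "i = j"
  proof (cases "i - j \<ge> 0")
    case True
    hence "(i - j) mod int n = i - j" using i j nk by (intro mod_pos_pos_trivial) auto
    thus ?thesis using m by simp
  next
    case False
    have "(i - j) mod int n = (i - j + int n) mod int n" by simp
    also have "\<dots> = i - j + int n" using i j nk False by (intro mod_pos_pos_trivial) auto
    finally show ?thesis using m i j nk by simp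
  qed
qed

lemma P_adj:
  assumes i: "i \<in> {-int k..int k}" and j: "j \<in> {-int k..int k}"
  shows "adj n D (P i) (P j) \<longleftrightarrow> \<bar>i - j\<bar> = 1"
proof -
  have nd: "nodiag D (P i)" using win i unfolding P_def by auto
  have dd: "-(2 * int k) \<le> i - j" "i - j \<le> 2 * int k" "-(2 * int k) \<le> j - i" "j - i \<le> 2 * int k" using i j by auto
  show ?thesis
  proof (cases "i = j")
    case True thus ?thesis by (simp add: adj_def)
  next
    case False
    hence ne: "P i \<noteq> P j" using P_inj i j by (auto dest: inj_onD)
    have "adj n D (P i) (P j) \<longleftrightarrow> (int (P i) - int (P j)) mod int n = 1 \<or> (int (P j) - int (P i)) mod int n = 1"
      using adj_nodiag[OF D nd] side_mod[OF P_lt P_lt ne n3] ne by simp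
    also have "\<dots> \<longleftrightarrow> (i - j) mod int n = 1 \<or> (j - i) mod int n = 1" using P_diff by simp
    also have "\<dots> \<longleftrightarrow> i - j = 1 \<or> j - i = 1" using small_mod1[OF dd(1,2)] small_mod1[OF dd(3,4)] by simp
    also have "\<dots> \<longleftrightarrow> \<bar>i - j\<bar> = 1" by auto
    finally show ?thesis .
  qed
qed


lemma P_next:
  assumes x: "x < n" and h: "(int x - int (P i)) mod int n = 1"
  shows "x = P (i + 1)"
proof -
  have "int x = int x mod int n" using x by simp
  also have "int x = (int x - int (P i)) + int (P i)" by simp
  hence "int x mod int n = ((int x - int (P i)) mod int n + int (P i)) mod int n"
    by (metis mod_add_left_eq)
  also have "\<dots> = (1 + (int v + i) mod int n) mod int n" using h P_int by simp
  also have "\<dots> = (int v + (i + 1)) mod int n" by (simp add: mod_add_right_eq algebra_simps)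
  also have "\<dots> = int (P (i + 1))" using P_int by simp
  finally show ?thesis by simp
qed

lemma P_prev:
  assumes x: "x < n" and h: "(int (P i) - int x) mod int n = 1"
  shows "x = P (i - 1)"
proof -
  have "int x = int x mod int n" using x by simp
  also have "int x = int (P i) - (int (P i) - int x)" by simp
  hence "int x mod int n = (int (P i) - (int (P i) - int x) mod int n) mod int n"
    by (metis mod_diff_right_eq)
  also have "\<dots> = ((int v + i) mod int n - 1) mod int n" using h P_int by simp
  also have "\<dots> = (int v + (i - 1)) mod int n" by (simp add: mod_diff_left_eq algebra_simps)
  also have "\<dots> = int (P (i - 1))" using P_int by simp
  finally show ?thesis by simp
qed

abbreviation "Rel \<equiv> {(a, b). adj n D a b}"

lemma reach_sub: "m \<le> k \<Longrightarrow> (v, x) \<in> Rel ^^ m \<Longrightarrow> x \<in> P ` {-int m..int m}"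
proof (induction m arbitrary: x)
  case 0 thus ?case using P0 by force
next
  case (Suc m)
  then obtain y where y: "(v, y) \<in> Rel ^^ m" "(y, x) \<in> Rel" by auto
  have "y \<in> P ` {-int m..int m}" using Suc y by simp
  then obtain i where i: "y = P i" "i \<in> {-int m..int m}" by auto
  have iw: "i \<in> {-int k..int k}" using i Suc.prems by auto
  have nd: "nodiag D y" using win iw i unfolding P_def by auto
  have a: "adj n D y x" using y by simp
  have xn: "x < n" using adj_lt[OF D n3 a] by simp
  have ne: "y \<noteq> x" using a by (simp add: adj_def)
  have "(min y x, max y x) \<in> poly_sides n" using adj_nodiag[OF D nd] a by simp
  hence "(int y - int x) mod int n = 1 \<or> (int x - int y) mod int n = 1"
    using side_mod[OF _ xn ne n3] P_lt i by simp
  hence "x = P (i + 1) \<or> x = P (i - 1)" using P_next[OF xn] P_prev[OF xn] i by auto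
  moreover have "i + 1 \<in> {-int (Suc m)..int (Suc m)}" "i - 1 \<in> {-int (Suc m)..int (Suc m)}" using i by auto
  ultimately show ?case by blast
qed

lemma reach_P: "m \<le> k \<Longrightarrow> (v, P (int m)) \<in> Rel ^^ m \<and> (v, P (- int m)) \<in> Rel ^^ m"
proof (induction m)
  case 0 thus ?case using P0 by simp
next
  case (Suc m)
  have h: "(v, P (int m)) \<in> Rel ^^ m" "(v, P (- int m)) \<in> Rel ^^ m" using Suc by auto
  have "adj n D (P (int m)) (P (int (Suc m)))" using P_adj Suc.prems by simp
  moreover have "adj n D (P (- int m)) (P (- int (Suc m)))" using P_adj Suc.prems by simp
  ultimately show ?case using h by (auto intro: relpow_Suc_I)
qed

lemma ball_eq: "ball_set n D v k = P ` {-int k..int k}"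
proof
  show "ball_set n D v k \<subseteq> P ` {-int k..int k}"
  proof
    fix x assume "x \<in> ball_set n D v k"
    then obtain m where m: "m \<le> k" "(v, x) \<in> Rel ^^ m" by (auto simp: ball_set_def)
    hence "x \<in> P ` {-int m..int m}" using reach_sub by simp
    thus "x \<in> P ` {-int k..int k}" using m(1) by force
  qed
next
  show "P ` {-int k..int k} \<subseteq> ball_set n D v k"
  proof
    fix x assume "x \<in> P ` {-int k..int k}"
    then obtain j where j: "x = P j" "j \<in> {-int k..int k}" by auto
    define m where "m = nat \<bar>j\<bar>"
    have mk: "m \<le> k" using j by (auto simp: m_def)
    have "j = int m \<or> j = - int m" by (auto simp: m_def)
    hence "(v, x) \<in> Rel ^^ m" using reach_P[OF mk] j by auto
    thus "x \<in> ball_set n D v k" using mk by (auto simp: ball_set_def)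
  qed
qed

lemma ball_path: "ball_is_path n D v k"
  unfolding ball_is_path_def
proof (intro exI conjI)
  show "bij_betw P {- int k..int k} (ball_set n D v k)" unfolding ball_eq using P_inj by (simp add: bij_betw_def)
  show "P 0 = v" by (rule P0)
  show "\<forall>i\<in>{- int k..int k}. \<forall>j\<in>{- int k..int k}. adj n D (P i) (P j) = (\<bar>i - j\<bar> = 1)"
    using P_adj by blast
qed

end

lemma good_ball:
  assumes "D \<in> dissections n" "n \<ge> 2 * k + 3" "v < n"
    "\<And>j. - int k \<le> j \<Longrightarrow> j \<le> int k \<Longrightarrow> nodiag D (nat ((int v + j) mod int n))"
  shows "ball_is_path n D v k"
  using ball_path[OF assms] .

lemma bad_count:
  assumes D: "D \<in> dissections n" and nk: "n \<ge> 2 * k + 3"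
  shows "card {v\<in>{..<n}. \<not> ball_is_path n D v k} \<le> 2 * card D * (2 * k + 1)"
proof -
  define Ends where "Ends = fst ` D \<union> snd ` D"
  have fD: "finite D" using diss_fin[OF D] .
  have fE: "finite Ends" using fD by (simp add: Ends_def)
  have cE: "card Ends \<le> 2 * card D"
  proof -
    have "card Ends \<le> card (fst ` D) + card (snd ` D)" unfolding Ends_def by (rule card_Un_le)
    also have "\<dots> \<le> card D + card D" using fD by (intro add_mono card_image_le) auto
    finally show ?thesis by simp
  qed
  define A where "A = (\<lambda>u. (\<lambda>j. nat ((int u - j) mod int n)) ` {-int k..int k})"
  have sub: "{v\<in>{..<n}. \<not> ball_is_path n D v k} \<subseteq> (\<Union>u\<in>Ends. A u)"
  proof
    fix v assume "v \<in> {v\<in>{..<n}. \<not> ball_is_path n D v k}"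
    hence v: "v < n" "\<not> ball_is_path n D v k" by auto
    then obtain j where j: "- int k \<le> j" "j \<le> int k" "\<not> nodiag D (nat ((int v + j) mod int n))"
      using good_ball[OF D nk] by blast
    define u where "u = nat ((int v + j) mod int n)"
    have uE: "u \<in> Ends" using j(3) unfolding u_def nodiag_def Ends_def by force
    have "int u = (int v + j) mod int n" unfolding u_def using nk by simp
    hence "(int u - j) mod int n = ((int v + j) - j) mod int n" by (simp add: mod_diff_left_eq)
    also have "\<dots> = int v" using v by simp
    finally have "v = nat ((int u - j) mod int n)" by simp
    hence "v \<in> A u" using j unfolding A_def by auto
    thus "v \<in> (\<Union>u\<in>Ends. A u)" using uE by blast
  qed
  have cA: "\<And>u. card (A u) \<le> 2 * k + 1"
  proof -
    fix u
    have "card (A u) \<le> card {-int k..int k}" unfolding A_def by (rule card_image_le) simp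
    also have "\<dots> = 2 * k + 1" by simp
    finally show "card (A u) \<le> 2 * k + 1" .
  qed
  have "card {v\<in>{..<n}. \<not> ball_is_path n D v k} \<le> card (\<Union>u\<in>Ends. A u)"
    using sub fE by (intro card_mono) (auto simp: A_def)
  also have "\<dots> \<le> (\<Sum>u\<in>Ends. card (A u))" by (rule card_UN_le[OF fE])
  also have "\<dots> \<le> (\<Sum>u\<in>Ends. 2 * k + 1)" using cA by (intro sum_mono) auto
  also have "\<dots> = card Ends * (2 * k + 1)" by simp
  also have "\<dots> \<le> 2 * card D * (2 * k + 1)" using cE by (intro mult_right_mono) auto
  finally show ?thesis .
qed


lemma diss_fin_set: "finite (dissections n)"
proof -
  have "dissections n \<subseteq> Pow (diagonals n)" by (auto simp: dissections_def)
  moreover have "finite (diagonals n)"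
    by (rule finite_subset[of _ "{..<n} \<times> {..<n}"]) (auto simp: diagonals_def)
  ultimately show ?thesis by (meson finite_Pow_iff finite_subset)
qed

lemma good_lower:
  assumes D: "D \<in> dissections n" and nk: "n \<ge> 2 * k + 3"
  shows "real (card {v\<in>{..<n}. ball_is_path n D v k}) \<ge> real n - real (2 * (2 * k + 1)) * real (card D)"
proof -
  have "card {v\<in>{..<n}. ball_is_path n D v k} + card {v\<in>{..<n}. \<not> ball_is_path n D v k} = n"
  proof -
    have "{..<n} = {v\<in>{..<n}. ball_is_path n D v k} \<union> {v\<in>{..<n}. \<not> ball_is_path n D v k}" by auto
    moreover have "{v\<in>{..<n}. ball_is_path n D v k} \<inter> {v\<in>{..<n}. \<not> ball_is_path n D v k} = {}" by auto
    ultimately show ?thesis by (metis (no_types, lifting) card_Un_disjoint card_lessThan finite_Un finite_lessThan)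
  qed
  moreover have "card {v\<in>{..<n}. \<not> ball_is_path n D v k} \<le> 2 * card D * (2 * k + 1)" by (rule bad_count[OF D nk])
  ultimately have "n \<le> card {v\<in>{..<n}. ball_is_path n D v k} + 2 * card D * (2 * k + 1)" by linarith
  hence "real n \<le> real (card {v\<in>{..<n}. ball_is_path n D v k}) + real (2 * card D * (2 * k + 1))"
    by (metis of_nat_add of_nat_le_iff)
  thus ?thesis by (simp add: algebra_simps)
qed

lemma good_upper: "card {v\<in>{..<n}. ball_is_path n D v k} \<le> n"
proof -
  have "card {v\<in>{..<n}. ball_is_path n D v k} \<le> card {..<n}" by (rule card_mono) auto
  thus ?thesis by simp
qed

theorem mainTheorem16:
  fixes \<gamma> :: "nat \<Rightarrow> real"
  assumes nonneg: "\<And>k. k \<ge> 3 \<Longrightarrow> \<gamma> k \<ge> 0"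
    and somepos: "\<exists>k\<ge>3. \<gamma> k > 0"
    and typeIII: "conv_radius (\<lambda>k. if k \<ge> 1 then \<gamma> (k + 2) else 0) = 0"
  shows "\<forall>k::nat. ((\<lambda>n. prob_ball_path \<gamma> n k) \<longlongrightarrow> 1)
           (inf sequentially (principal {n. n \<ge> 3 \<and> total_weight \<gamma> n > 0}))"
proof
  fix k :: nat
  define c :: real where "c = real (2 * (2 * k + 1))"
  have cpos: "c > 0" by (simp add: c_def)
  show "((\<lambda>n. prob_ball_path \<gamma> n k) \<longlongrightarrow> 1) (inf sequentially (principal {n. n \<ge> 3 \<and> total_weight \<gamma> n > 0}))"
    unfolding tendsto_iff eventually_inf_principal
  proof (intro allI impI)
    fix eps :: real assume eps: "eps > 0"
    define dl where "dl = eps / (4 * c)"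
    have dl: "dl > 0" using eps cpos by (simp add: dl_def)
    obtain N1 where N1: "\<And>n D. n \<ge> N1 \<Longrightarrow> D \<in> dissections n \<Longrightarrow> real (card D) \<ge> dl * n \<Longrightarrow>
        dweight \<gamma> n D * 32 ^ n \<le> total_weight \<gamma> n"
      using many_diag_small[OF nonneg typeIII dl] by blast
    obtain N2 where N2: "(1/2::real) ^ N2 < dl" using real_arch_pow_inv[OF dl, of "1/2"] by auto
    define N where "N = max (max N1 N2) (2 * k + 3)"
    have "\<forall>n\<ge>N. n \<in> {n. n \<ge> 3 \<and> total_weight \<gamma> n > 0} \<longrightarrow> dist (prob_ball_path \<gamma> n k) 1 < eps"
    proof (intro allI impI)
      fix n assume nN: "n \<ge> N" and nS: "n \<in> {n. n \<ge> 3 \<and> total_weight \<gamma> n > 0}"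
      have n3: "n \<ge> 3" and W: "total_weight \<gamma> n > 0" using nS by auto
      have nk: "n \<ge> 2 * k + 3" using nN by (simp add: N_def)
      define W where "W = total_weight \<gamma> n"
      define G where "G = (\<lambda>D. real (card {v\<in>{..<n}. ball_is_path n D v k}))"
      have Wpos: "W > 0" using W by (simp add: W_def)
      have wnn: "\<And>D. dweight \<gamma> n D \<ge> 0" using dweight_nonneg[of \<gamma>, OF nonneg] by blast
      have npos: "real n > 0" using n3 by simp
      have prob: "prob_ball_path \<gamma> n k = (\<Sum>D\<in>dissections n. dweight \<gamma> n D * G D) / (real n * W)"
        by (simp add: prob_ball_path_def W_def G_def)
      have up: "(\<Sum>D\<in>dissections n. dweight \<gamma> n D * G D) \<le> real n * W"
      proof -
        have "(\<Sum>D\<in>dissections n. dweight \<gamma> n D * G D) \<le> (\<Sum>D\<in>dissections n. dweight \<gamma> n D * real n)"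
          using wnn good_upper unfolding G_def by (intro sum_mono mult_left_mono) auto
        also have "\<dots> = (\<Sum>D\<in>dissections n. dweight \<gamma> n D) * real n" by (rule sum_distrib_right[symmetric])
        also have "\<dots> = real n * W" by (simp add: W_def total_weight_def)
        finally show ?thesis .
      qed
      have cardb: "\<And>D. D \<in> dissections n \<Longrightarrow>
          dweight \<gamma> n D * real (card D) \<le> dweight \<gamma> n D * (dl * n) + real n * (W / 32 ^ n)"
      proof -
        fix D assume D: "D \<in> dissections n"
        show "dweight \<gamma> n D * real (card D) \<le> dweight \<gamma> n D * (dl * n) + real n * (W / 32 ^ n)"
        proof (cases "real (card D) \<ge> dl * n")
          case True
          have "dweight \<gamma> n D * 32 ^ n \<le> W" using N1[OF _ D True] nN by (simp add: N_def W_def)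
          hence wl: "dweight \<gamma> n D \<le> W / 32 ^ n" by (simp add: field_simps)
          have "card D \<le> n" using diss_card_le[OF D n3] by simp
          hence "dweight \<gamma> n D * real (card D) \<le> (W / 32 ^ n) * real n"
            using wl wnn Wpos by (intro mult_mono) auto
          moreover have "dweight \<gamma> n D * (dl * n) \<ge> 0" using wnn dl by simp
          ultimately show ?thesis by (simp add: mult.commute)
        next
          case False
          hence "dweight \<gamma> n D * real (card D) \<le> dweight \<gamma> n D * (dl * n)" using wnn by (intro mult_left_mono) auto
          moreover have "real n * (W / 32 ^ n) \<ge> 0" using Wpos by simp
          ultimately show ?thesis by linarith
        qed
      qed
      have sumcard: "(\<Sum>D\<in>dissections n. dweight \<gamma> n D * real (card D)) \<le> dl * n * W + real n * W * (1/2) ^ n"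
      proof -
        have "(\<Sum>D\<in>dissections n. dweight \<gamma> n D * real (card D))
            \<le> (\<Sum>D\<in>dissections n. dweight \<gamma> n D * (dl * n) + real n * (W / 32 ^ n))"
          using cardb by (intro sum_mono) auto
        also have "\<dots> = (\<Sum>D\<in>dissections n. dweight \<gamma> n D * (dl * n)) + (\<Sum>D\<in>dissections n. real n * (W / 32 ^ n))"
          by (rule sum.distrib)
        also have "(\<Sum>D\<in>dissections n. dweight \<gamma> n D * (dl * n)) = (\<Sum>D\<in>dissections n. dweight \<gamma> n D) * (dl * n)"
          by (rule sum_distrib_right[symmetric])
        also have "(\<Sum>D\<in>dissections n. dweight \<gamma> n D) = W" by (simp add: W_def total_weight_def)
        also have "(\<Sum>D\<in>dissections n. real n * (W / 32 ^ n)) = real (card (dissections n)) * (real n * (W / 32 ^ n))"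
          by simp
        also have "W * (dl * n) = dl * n * W" by simp
        also have "real (card (dissections n)) * (real n * (W / 32 ^ n)) \<le> 16 ^ n * (real n * (W / 32 ^ n))"
          using diss_count[OF n3] Wpos by (intro mult_right_mono) auto
        also have "16 ^ n * (real n * (W / 32 ^ n)) = real n * W * (16 ^ n / 32 ^ n)" by simp
        also have "(16::real) ^ n / 32 ^ n = (1/2) ^ n" by (simp add: power_divide[symmetric])
        finally show ?thesis by simp
      qed
      have low: "(\<Sum>D\<in>dissections n. dweight \<gamma> n D * G D) \<ge> real n * W - c * (dl * n * W + real n * W * (1/2) ^ n)"
      proof -
        have "(\<Sum>D\<in>dissections n. dweight \<gamma> n D * G D) \<ge> (\<Sum>D\<in>dissections n. dweight \<gamma> n D * (real n - c * real (card D)))"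
          using good_lower[OF _ nk] wnn unfolding G_def c_def by (intro sum_mono mult_left_mono) auto
        also have "(\<Sum>D\<in>dissections n. dweight \<gamma> n D * (real n - c * real (card D)))
            = real n * W - c * (\<Sum>D\<in>dissections n. dweight \<gamma> n D * real (card D))"
          by (simp add: W_def total_weight_def right_diff_distrib sum_subtractf sum_distrib_left sum_distrib_right algebra_simps)
        finally show ?thesis using sumcard cpos
          by (smt (verit, ccfv_SIG) mult_left_mono)
      qed
      have half: "(1/2::real) ^ n < dl"
      proof -
        have "(1/2::real) ^ n \<le> (1/2) ^ N2" using nN by (intro power_decreasing) (auto simp: N_def)
        thus ?thesis using N2 by linarith
      qed
      have nW: "real n * W > 0" using npos Wpos by simp
      have p1: "prob_ball_path \<gamma> n k \<le> 1" unfolding prob using up nW by (simp add: divide_le_eq_1)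
      have "prob_ball_path \<gamma> n k \<ge> 1 - c * (dl + (1/2)^n)"
      proof -
        have "real n * W - c * (dl * n * W + real n * W * (1/2) ^ n) = (real n * W) * (1 - c * (dl + (1/2)^n))"
          by (simp add: algebra_simps)
        hence "(\<Sum>D\<in>dissections n. dweight \<gamma> n D * G D) \<ge> (real n * W) * (1 - c * (dl + (1/2)^n))" using low by simp
        thus ?thesis unfolding prob using nW by (simp add: le_divide_eq mult.commute)
      qed
      moreover have "c * (dl + (1/2)^n) < eps"
      proof -
        have "c * (dl + (1/2)^n) < c * (dl + dl)" using half cpos by simp
        also have "\<dots> = eps / 2" using cpos by (simp add: dl_def field_simps)
        finally show ?thesis using eps by simp
      qed
      ultimately show "dist (prob_ball_path \<gamma> n k) 1 < eps" using p1 by (simp add: dist_real_def)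
    qed
    thus "\<forall>\<^sub>F n in sequentially. n \<in> {n. n \<ge> 3 \<and> total_weight \<gamma> n > 0} \<longrightarrow> dist (prob_ball_path \<gamma> n k) 1 < eps"
      unfolding eventually_sequentially by blast
  qed
qed


end
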